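(* Consider the nonpreemptive Lazy Bureaucrat Problem restricted to instances with $d_i-a_i<2t_i$ for every job $i$, and let $K=\max_i d_i$. For each of the objectives (1), (2) and (3), an optimal feasible schedule can be computed in $O(nK\max(n,K))$ time.
   Context: An instance of the Lazy Bureaucrat Problem (LBP) consists of jobs $1,\dots,n$; job $i$ has a processing time $t_i$, an arrival time $a_i$ and a deadline $d_i$, all nonnegative integers. Its critical time is $c_i=d_i-t_i$. A single processor (the bureaucrat) processes at most one job at a time. In the nonpreemptive setting, a schedule chooses a set of executed jobs and, for each executed job $i$, a start time $s_i$ with $a_i\le s_i\le c_i$; job $i$ is then processed without interruption during $[s_i,s_i+t_i)$, these intervals are pairwise disjoint, and each job is executed at most once. A job $i$ is executable at time $\tau$ if it has not been started before $\tau$ and $a_i\le\tau\le c_i$. A schedule is feasible if it satisfies the busy requirement: at every time $\tau$ at which the processor is not processing a job, no job is executable. The objectives, each to be minimized over feasible schedules, are: (1) the total time spent working, $\sum t_i$ over executed jobs; (2) the weighted sum of completed jobs, where job $i$ has weight $t_i$; (3) the makespan, i.e. the largest completion time $s_i+t_i$ of an executed job. *)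

theory Defs
  imports Complex_Main
begin

type_synonym job = "nat \<times> nat \<times> nat"

definition pt :: "job \<Rightarrow> real" where "pt j = real (fst j)"
definition arr :: "job \<Rightarrow> real" where "arr j = real (fst (snd j))"
definition dl :: "job \<Rightarrow> real" where "dl j = real (snd (snd j))"
definition crit :: "job \<Rightarrow> real" where "crit j = dl j - pt j"

type_synonym schedule = "nat \<Rightarrow> real option"

definition valid_schedule :: "job list \<Rightarrow> schedule \<Rightarrow> bool" where
  "valid_schedule J S \<longleftrightarrow>
     (\<forall>i<length J. \<forall>s. S i = Some s \<longrightarrow> arr (J!i) \<le> s \<and> s \<le> crit (J!i)) \<and>
     (\<forall>i<length J. \<forall>j<length J. i \<noteq> j \<longrightarrow>
        (\<forall>si sj. S i = Some si \<longrightarrow> S j = Some sj \<longrightarrow>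
           {si..<si + pt (J!i)} \<inter> {sj..<sj + pt (J!j)} = {}))"

definition processing :: "job list \<Rightarrow> schedule \<Rightarrow> real \<Rightarrow> bool" where
  "processing J S \<tau> \<longleftrightarrow> (\<exists>i<length J. \<exists>s. S i = Some s \<and> s \<le> \<tau> \<and> \<tau> < s + pt (J!i))"

definition executable :: "job list \<Rightarrow> schedule \<Rightarrow> nat \<Rightarrow> real \<Rightarrow> bool" where
  "executable J S i \<tau> \<longleftrightarrow>
     (\<forall>s. S i = Some s \<longrightarrow> \<tau> \<le> s) \<and> arr (J!i) \<le> \<tau> \<and> \<tau> \<le> crit (J!i)"

definition feasible :: "job list \<Rightarrow> schedule \<Rightarrow> bool" where
  "feasible J S \<longleftrightarrow> valid_schedule J S \<and>
     (\<forall>\<tau>. \<not> processing J S \<tau> \<longrightarrow> \<not> (\<exists>i<length J. executable J S i \<tau>))"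

definition executed :: "job list \<Rightarrow> schedule \<Rightarrow> nat set" where
  "executed J S = {i. i < length J \<and> S i \<noteq> None}"

definition total_work :: "job list \<Rightarrow> schedule \<Rightarrow> real" where
  "total_work J S = (\<Sum>i\<in>executed J S. pt (J!i))"

text \<open>Objective (2): weighted sum of completed jobs, weight of job i is t_i.
  (In the nonpreemptive setting every executed job is completed.)\<close>
definition weighted_completed :: "job list \<Rightarrow> schedule \<Rightarrow> real" where
  "weighted_completed J S = (\<Sum>i\<in>{i. i < length J \<and> (\<exists>s. S i = Some s)}. pt (J!i))"

definition makespan :: "job list \<Rightarrow> schedule \<Rightarrow> real" where
  "makespan J S = Max (insert 0 {s + pt (J!i) | i s. i < length J \<and> S i = Some s})"

definition lbp_objective :: "nat \<Rightarrow> job list \<Rightarrow> schedule \<Rightarrow> real" where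
  "lbp_objective k = (if k = 1 then total_work else if k = 2 then weighted_completed
                      else makespan)"

definition lbp_optimal :: "(job list \<Rightarrow> schedule \<Rightarrow> real) \<Rightarrow> job list \<Rightarrow> schedule \<Rightarrow> bool" where
  "lbp_optimal obj J S \<longleftrightarrow> feasible J S \<and> (\<forall>S'. feasible J S' \<longrightarrow> obj J S \<le> obj J S')"

definition lbp_restricted :: "job \<Rightarrow> bool" where
  "lbp_restricted j \<longleftrightarrow> int (snd (snd j)) - int (fst (snd j)) < 2 * int (fst j)"

definition lbp_K :: "job list \<Rightarrow> nat" where
  "lbp_K J = Max (insert 0 (set (map (\<lambda>j. snd (snd j)) J)))"

datatype instr =
    Const nat int
  | Add nat nat nat
  | Sub nat nat nat
  | LoadI nat nat
  | StoreI nat nat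
  | Jle nat nat nat
  | Halt

type_synonym ram_state = "nat \<times> (int \<Rightarrow> int)"

fun exec_instr :: "instr \<Rightarrow> ram_state \<Rightarrow> ram_state" where
  "exec_instr (Const k c) (pc, m) = (pc + 1, m(int k := c))"
| "exec_instr (Add i j k) (pc, m) = (pc + 1, m(int i := m (int j) + m (int k)))"
| "exec_instr (Sub i j k) (pc, m) = (pc + 1, m(int i := m (int j) - m (int k)))"
| "exec_instr (LoadI i j) (pc, m) = (pc + 1, m(int i := m (m (int j))))"
| "exec_instr (StoreI i j) (pc, m) = (pc + 1, m(m (int i) := m (int j)))"
| "exec_instr (Jle i j l) (pc, m) = (if m (int i) \<le> m (int j) then l else pc + 1, m)"
| "exec_instr Halt s = s"

definition ram_halted :: "instr list \<Rightarrow> ram_state \<Rightarrow> bool" where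
  "ram_halted P s \<longleftrightarrow> length P \<le> fst s \<or> P ! fst s = Halt"

definition ram_step :: "instr list \<Rightarrow> ram_state \<Rightarrow> ram_state" where
  "ram_step P s = (if ram_halted P s then s else exec_instr (P ! fst s) s)"

text \<open>Input encoding: mem[0] = n, mem[1+3i] = t_i, mem[2+3i] = a_i, mem[3+3i] = d_i,
  all other cells 0; the program counter starts at 0.\<close>
definition initial_mem :: "job list \<Rightarrow> int \<Rightarrow> int" where
  "initial_mem J x =
     (if x = 0 then int (length J)
      else if 1 \<le> x \<and> x \<le> 3 * int (length J) then
        (let j = J ! nat ((x - 1) div 3); r = (x - 1) mod 3 in
           if r = 0 then int (fst j) else if r = 1 then int (fst (snd j)) else int (snd (snd j)))
      else 0)"

definition output_schedule :: "(int \<Rightarrow> int) \<Rightarrow> schedule" where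
  "output_schedule m i =
     (if m (1 + 2 * int i) \<noteq> 0 then Some (real_of_int (m (2 + 2 * int i))) else None)"

end

theory Submission
  imports Defs
begin


type_synonym mem = "int \<Rightarrow> int"

datatype cmd = Skip | Basic instr | Seq cmd cmd | IfLe nat nat cmd cmd | WhileLe nat nat cmd

fun clen :: "cmd \<Rightarrow> nat" where
  "clen Skip = 0"
| "clen (Basic x) = 1"
| "clen (Seq a b) = clen a + clen b"
| "clen (IfLe i j a b) = 2 + clen b + clen a"
| "clen (WhileLe i j c) = 3 + clen c"

fun compc :: "nat \<Rightarrow> cmd \<Rightarrow> instr list" where
  "compc p Skip = []"
| "compc p (Basic x) = [x]"
| "compc p (Seq a b) = compc p a @ compc (p + clen a) b"
| "compc p (IfLe i j a b) = [Jle i j (p + 2 + clen b)] @ compc (p + 1) b @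
      [Jle 0 0 (p + 2 + clen b + clen a)] @ compc (p + 2 + clen b) a"
| "compc p (WhileLe i j c) = [Jle i j (p + 2), Jle 0 0 (p + 3 + clen c)] @ compc (p + 2) c @ [Jle 0 0 p]"

lemma length_comp[simp]: "length (compc p c) = clen c"
  by (induction c arbitrary: p) auto

fun isbasic :: "instr \<Rightarrow> bool" where
  "isbasic (Jle _ _ _) = False"
| "isbasic Halt = False"
| "isbasic _ = True"

definition eff :: "instr \<Rightarrow> mem \<Rightarrow> mem" where
  "eff x m = snd (exec_instr x (0, m))"

lemma eff_simps[simp]:
  "eff (Const k c) m = m(int k := c)"
  "eff (Add i j k) m = m(int i := m (int j) + m (int k))"
  "eff (Sub i j k) m = m(int i := m (int j) - m (int k))"
  "eff (LoadI i j) m = m(int i := m (m (int j)))"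
  "eff (StoreI i j) m = m(m (int i) := m (int j))"
  by (simp_all add: eff_def)

lemma exec_basic: "isbasic x \<Longrightarrow> exec_instr x (p, m) = (Suc p, eff x m)"
  by (cases x) (auto simp: eff_def)

inductive bs :: "cmd \<Rightarrow> mem \<Rightarrow> mem \<Rightarrow> nat \<Rightarrow> bool" where
  bSkip: "bs Skip m m 0"
| bBasic: "isbasic x \<Longrightarrow> bs (Basic x) m (eff x m) 1"
| bSeq: "bs a m m1 k1 \<Longrightarrow> bs b m1 m2 k2 \<Longrightarrow> bs (Seq a b) m m2 (k1 + k2)"
| bIfT: "m (int i) \<le> m (int j) \<Longrightarrow> bs a m m' k \<Longrightarrow> bs (IfLe i j a b) m m' (k + 1)"
| bIfF: "\<not> m (int i) \<le> m (int j) \<Longrightarrow> bs b m m' k \<Longrightarrow> bs (IfLe i j a b) m m' (k + 2)"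
| bWF: "\<not> m (int i) \<le> m (int j) \<Longrightarrow> bs (WhileLe i j c) m m 2"
| bWT: "m (int i) \<le> m (int j) \<Longrightarrow> bs c m m1 k1 \<Longrightarrow> bs (WhileLe i j c) m1 m2 k2 \<Longrightarrow>
        bs (WhileLe i j c) m m2 (k1 + k2 + 2)"

lemma step_at:
  assumes "P = xs @ x # ys" "length xs = p" "x \<noteq> Halt"
  shows "ram_step P (p, m) = exec_instr x (p, m)"
  using assms by (simp add: ram_step_def ram_halted_def nth_append)

lemma funpow_plus: "(f ^^ (a + b)) s = (f ^^ b) ((f ^^ a) s)"
  by (simp add: funpow_add add.commute[of a b])

lemma funpow_Suc_first: "(f ^^ Suc a) s = (f ^^ a) (f s)"
  unfolding funpow_Suc_right by simp

lemma bs_correct: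
  assumes "bs c m m' k"
  shows "P = xs @ compc (length xs) c @ ys \<Longrightarrow>
         (ram_step P ^^ k) (length xs, m) = (length xs + clen c, m')"
  using assms
proof (induction arbitrary: xs ys rule: bs.induct)
  case (bSkip m)
  then show ?case by simp
next
  case (bBasic x m)
  have "x \<noteq> Halt" using bBasic by auto
  then have "ram_step P (length xs, m) = exec_instr x (length xs, m)"
    using bBasic by (intro step_at[of _ xs x ys]) auto
  then show ?case using bBasic by (simp add: exec_basic)
next
  case (bSeq a m m1 k1 b m2 k2)
  have A: "(ram_step P ^^ k1) (length xs, m) = (length xs + clen a, m1)"
    using bSeq.IH(1)[of xs "compc (length xs + clen a) b @ ys"] bSeq.prems by simp
  have B: "(ram_step P ^^ k2) (length (xs @ compc (length xs) a), m1) =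
      (length (xs @ compc (length xs) a) + clen b, m2)"
    using bSeq.IH(2)[of "xs @ compc (length xs) a" ys] bSeq.prems by simp
  show ?case using A B by (simp add: funpow_plus)
next
  case (bIfT m i j a m' k b)
  let ?p = "length xs"
  have s1: "ram_step P (?p, m) = (?p + 2 + clen b, m)"
    using bIfT by (subst step_at[of _ xs _ "compc (Suc ?p) b @ Jle 0 0 (?p + 2 + clen b + clen a) # compc (?p + 2 + clen b) a @ ys"]) auto
  have "(ram_step P ^^ k) (length (xs @ Jle i j (?p + 2 + clen b) # compc (?p + 1) b @ [Jle 0 0 (?p + 2 + clen b + clen a)]), m)
        = (length (xs @ Jle i j (?p + 2 + clen b) # compc (?p + 1) b @ [Jle 0 0 (?p + 2 + clen b + clen a)]) + clen a, m')"
    using bIfT by (intro bIfT.IH) simp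
  moreover have "(ram_step P ^^ (k + 1)) (?p, m) = (ram_step P ^^ k) (ram_step P (?p, m))"
    by (simp only: Suc_eq_plus1[symmetric] funpow_Suc_first)
  ultimately show ?case using s1 by (simp add: algebra_simps)
next
  case (bIfF m i j b m' k a)
  let ?p = "length xs"
  have s1: "ram_step P (?p, m) = (Suc ?p, m)"
    using bIfF by (subst step_at[of _ xs _ "compc (Suc ?p) b @ Jle 0 0 (?p + 2 + clen b + clen a) # compc (?p + 2 + clen b) a @ ys"]) auto
  have s2: "(ram_step P ^^ k) (length (xs @ [Jle i j (?p + 2 + clen b)]), m) =
       (length (xs @ [Jle i j (?p + 2 + clen b)]) + clen b, m')"
    using bIfF by (intro bIfF.IH) simp
  have s3: "ram_step P (Suc ?p + clen b, m') = (?p + 2 + clen b + clen a, m')"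
    using bIfF by (subst step_at[of _ "xs @ Jle i j (?p + 2 + clen b) # compc (Suc ?p) b" _ "compc (?p + 2 + clen b) a @ ys"]) auto
  have "(ram_step P ^^ (k + 2)) (?p, m) = ram_step P ((ram_step P ^^ k) (ram_step P (?p, m)))"
  proof -
    have e: "k + 2 = Suc (Suc k)" by simp
    have "(ram_step P ^^ (Suc (Suc k))) (?p, m) = ram_step P ((ram_step P ^^ (Suc k)) (?p, m))"
      by simp
    also have "(ram_step P ^^ (Suc k)) (?p, m) = (ram_step P ^^ k) (ram_step P (?p, m))"
      by (rule funpow_Suc_first)
    finally show ?thesis unfolding e .
  qed
  then show ?case using s1 s2 s3 by (simp add: algebra_simps)
next
  case (bWF m i j c)
  let ?p = "length xs"
  have s1: "ram_step P (?p, m) = (Suc ?p, m)"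
    using bWF by (subst step_at[of _ xs _ "Jle 0 0 (?p + 3 + clen c) # compc (?p + 2) c @ Jle 0 0 ?p # ys"]) auto
  have s2: "ram_step P (Suc ?p, m) = (?p + 3 + clen c, m)"
    using bWF by (subst step_at[of _ "xs @ [Jle i j (?p + 2)]" _ "compc (?p + 2) c @ Jle 0 0 ?p # ys"]) auto
  show ?case using s1 s2 by (simp add: numeral_2_eq_2)
next
  case (bWT m i j c m1 k1 m2 k2)
  let ?p = "length xs"
  have s1: "ram_step P (?p, m) = (?p + 2, m)"
    using bWT by (subst step_at[of _ xs _ "Jle 0 0 (?p + 3 + clen c) # compc (?p + 2) c @ Jle 0 0 ?p # ys"]) auto
  have s2: "(ram_step P ^^ k1) (length (xs @ [Jle i j (?p + 2), Jle 0 0 (?p + 3 + clen c)]), m) =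
      (length (xs @ [Jle i j (?p + 2), Jle 0 0 (?p + 3 + clen c)]) + clen c, m1)"
    using bWT by (intro bWT.IH(1)) simp
  have s3: "ram_step P (?p + 2 + clen c, m1) = (?p, m1)"
    using bWT by (subst step_at[of _ "xs @ [Jle i j (?p + 2), Jle 0 0 (?p + 3 + clen c)] @ compc (?p + 2) c" _ ys]) auto
  have s4: "(ram_step P ^^ k2) (?p, m1) = (?p + clen (WhileLe i j c), m2)"
    using bWT by (intro bWT.IH(2)) simp
  have "(ram_step P ^^ (k1 + k2 + 2)) (?p, m) = (ram_step P ^^ k2) (ram_step P ((ram_step P ^^ k1) (ram_step P (?p, m))))"
  proof -
    have e: "k1 + k2 + 2 = ((1 + k1) + 1) + k2" by simp
    show ?thesis unfolding e funpow_plus by simp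
  qed
  then show ?case using s1 s2 s3 s4 by simp
qed

definition hoare :: "(mem \<Rightarrow> nat \<Rightarrow> bool) \<Rightarrow> cmd \<Rightarrow> (mem \<Rightarrow> nat \<Rightarrow> bool) \<Rightarrow> bool" where
  "hoare P c Q \<longleftrightarrow> (\<forall>m k. P m k \<longrightarrow> (\<exists>m' k'. bs c m m' k' \<and> Q m' (k + k')))"

lemma hoare_conseq:
  assumes "hoare P c Q" "\<And>m k. P' m k \<Longrightarrow> P m k" "\<And>m k. Q m k \<Longrightarrow> Q' m k"
  shows "hoare P' c Q'"
  using assms unfolding hoare_def by blast

lemma hoare_seq:
  assumes "hoare P a R" "hoare R b Q"
  shows "hoare P (Seq a b) Q"
  unfolding hoare_def
proof (intro allI impI)
  fix m k assume "P m k"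
  then obtain m1 k1 where 1: "bs a m m1 k1" "R m1 (k + k1)" using assms(1) unfolding hoare_def by blast
  then obtain m2 k2 where 2: "bs b m1 m2 k2" "Q m2 (k + k1 + k2)" using assms(2) unfolding hoare_def by blast
  show "\<exists>m' k'. bs (Seq a b) m m' k' \<and> Q m' (k + k')"
    using 1 2 bs.bSeq[OF 1(1) 2(1)] by (metis add.assoc)
qed

lemma hoare_while:
  fixes f :: "mem \<Rightarrow> nat"
  assumes body: "\<And>v. hoare (\<lambda>m k. I m k \<and> m (int i) \<le> m (int j) \<and> f m = v) c (\<lambda>m k. I m (k + 2) \<and> f m < v)"
  and ex: "\<And>m k. I m k \<Longrightarrow> \<not> m (int i) \<le> m (int j) \<Longrightarrow> Q m (k + 2)"
  shows "hoare I (WhileLe i j c) Q"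
  unfolding hoare_def
proof (intro allI impI)
  fix m k assume "I m k"
  then show "\<exists>m' k'. bs (WhileLe i j c) m m' k' \<and> Q m' (k + k')"
  proof (induction "f m" arbitrary: m k rule: less_induct)
    case less
    show ?case
    proof (cases "m (int i) \<le> m (int j)")
      case False
      then show ?thesis using ex[OF less.prems] bs.bWF[OF False] by blast
    next
      case True
      obtain m1 k1 where 1: "bs c m m1 k1" "I m1 (k + k1 + 2)" "f m1 < f m"
        using body[of "f m"] less.prems True unfolding hoare_def by (metis add.assoc)
      obtain m2 k2 where 2: "bs (WhileLe i j c) m1 m2 k2" "Q m2 (k + k1 + 2 + k2)"
        using less.hyps[OF 1(3) 1(2)] by blast
      show ?thesis using bs.bWT[OF True 1(1) 2(1)] 2(2) by (metis add.assoc add.commute)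
    qed
  qed
qed

fun wp :: "cmd \<Rightarrow> (mem \<Rightarrow> nat \<Rightarrow> bool) \<Rightarrow> mem \<Rightarrow> nat \<Rightarrow> bool" where
  "wp Skip Q = Q"
| "wp (Basic x) Q = (\<lambda>m k. isbasic x \<and> Q (eff x m) (k + 1))"
| "wp (Seq a b) Q = wp a (wp b Q)"
| "wp (IfLe i j a b) Q = (\<lambda>m k. if m (int i) \<le> m (int j) then wp a (\<lambda>m k. Q m (k + 1)) m k
                                  else wp b (\<lambda>m k. Q m (k + 2)) m k)"
| "wp (WhileLe i j c) Q = (\<lambda>m k. False)"

lemma wp_sound: "wp c Q m k \<Longrightarrow> \<exists>m' k'. bs c m m' k' \<and> Q m' (k + k')"
proof (induction c arbitrary: Q m k)
  case Skip
  then show ?case using bs.bSkip by fastforce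
next
  case (Basic x)
  then show ?case using bs.bBasic[of x m] by fastforce
next
  case (Seq a b)
  from Seq.prems have "wp a (wp b Q) m k" by simp
  then obtain m1 k1 where 1: "bs a m m1 k1" "wp b Q m1 (k + k1)" using Seq.IH(1) by blast
  then obtain m2 k2 where 2: "bs b m1 m2 k2" "Q m2 (k + k1 + k2)" using Seq.IH(2) by blast
  show ?case using bs.bSeq[OF 1(1) 2(1)] 2(2) by (metis add.assoc)
next
  case (IfLe i j a b)
  show ?case
  proof (cases "m (int i) \<le> m (int j)")
    case True
    then have "wp a (\<lambda>m k. Q m (k + 1)) m k" using IfLe.prems by simp
    then obtain m1 k1 where "bs a m m1 k1" "Q m1 (k + k1 + 1)" using IfLe.IH(1) by blast
    then show ?thesis using bs.bIfT[OF True, of a m1 k1 b] by (metis add.assoc)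
  next
    case False
    then have "wp b (\<lambda>m k. Q m (k + 2)) m k" using IfLe.prems by simp
    then obtain m1 k1 where "bs b m m1 k1" "Q m1 (k + k1 + 2)" using IfLe.IH(2) by blast
    then show ?thesis using bs.bIfF[OF False, of b m1 k1 a] by (metis add.assoc)
  qed
next
  case (WhileLe i j c)
  then show ?case by simp
qed

lemma hoare_wpI: "(\<And>m k. P m k \<Longrightarrow> wp c Q m k) \<Longrightarrow> hoare P c Q"
  unfolding hoare_def using wp_sound by blast

lemma hoare_seq_wp: "hoare P a R \<Longrightarrow> (\<And>m k. R m k \<Longrightarrow> wp b Q m k) \<Longrightarrow> hoare P (Seq a b) Q"
  by (rule hoare_seq, assumption, rule hoare_wpI)

lemma wp_seq_hoare: "(\<And>m k. P m k \<Longrightarrow> wp a R m k) \<Longrightarrow> hoare R b Q \<Longrightarrow> hoare P (Seq a b) Q"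
  by (rule hoare_seq, rule hoare_wpI)

lemma hoare_run:
  assumes "hoare P c Q" "P m 0"
  shows "\<exists>k m'. (ram_step (compc 0 c) ^^ k) (0, m) = (clen c, m') \<and> Q m' k"
proof -
  obtain m' k where "bs c m m' k" "Q m' k" using assms unfolding hoare_def by fastforce
  moreover have "(ram_step (compc 0 c) ^^ k) (0, m) = (clen c, m')"
    using bs_correct[OF \<open>bs c m m' k\<close>, of "compc 0 c" "[]" "[]"] by simp
  ultimately show ?thesis by blast
qed


definition tt :: "job list \<Rightarrow> nat \<Rightarrow> nat" where "tt J j = fst (J ! j)"
definition aa :: "job list \<Rightarrow> nat \<Rightarrow> nat" where "aa J j = fst (snd (J ! j))"
definition dd :: "job list \<Rightarrow> nat \<Rightarrow> nat" where "dd J j = snd (snd (J ! j))"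

lemma pt_eq: "pt (J ! j) = real (tt J j)" by (simp add: pt_def tt_def)
lemma arr_eq: "arr (J ! j) = real (aa J j)" by (simp add: arr_def aa_def)
lemma crit_eq: "crit (J ! j) = real (dd J j) - real (tt J j)" by (simp add: crit_def dl_def pt_def dd_def tt_def)

lemma nat_int_plus1[simp]: "nat (int j + 1) = Suc j" by arith

definition exj :: "job list \<Rightarrow> nat \<Rightarrow> nat \<Rightarrow> bool" where
  "exj J \<tau> j \<longleftrightarrow> j < length J \<and> aa J j \<le> \<tau> \<and> \<tau> + tt J j \<le> dd J j"

definition futj :: "job list \<Rightarrow> nat \<Rightarrow> bool" where
  "futj J \<tau> \<longleftrightarrow> (\<exists>j<length J. \<tau> < aa J j \<and> aa J j + tt J j \<le> dd J j)"

definition candf :: "bool \<Rightarrow> nat \<Rightarrow> nat \<Rightarrow> int \<Rightarrow> int" where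
  "candf mk \<tau> t v = (if mk then max (int \<tau> + int t) v else int t + v)"

definition candfR :: "bool \<Rightarrow> real \<Rightarrow> real \<Rightarrow> real \<Rightarrow> real" where
  "candfR mk \<tau> t v = (if mk then max (\<tau> + t) v else t + v)"

lemma candf_real: "real_of_int (candf mk \<tau> t v) = candfR mk (real \<tau>) (real t) (real_of_int v)"
  by (auto simp: candf_def candfR_def max_def)

lemma candfR_mono: "v \<le> w \<Longrightarrow> candfR mk \<tau> t v \<le> candfR mk \<tau> t w"
  by (auto simp: candfR_def)

definition goodAt :: "job list \<Rightarrow> bool \<Rightarrow> (nat \<Rightarrow> int) \<Rightarrow> (nat \<Rightarrow> int) \<Rightarrow> nat \<Rightarrow> bool" where
  "goodAt J mk V C \<tau> \<longleftrightarrow>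
    (C \<tau> \<ge> 1 \<and> exj J \<tau> (nat (C \<tau>) - 1) \<and>
       V \<tau> = candf mk \<tau> (tt J (nat (C \<tau>) - 1)) (V (\<tau> + tt J (nat (C \<tau>) - 1))) \<and>
       (\<forall>j. exj J \<tau> j \<longrightarrow> V \<tau> \<le> candf mk \<tau> (tt J j) (V (\<tau> + tt J j))))
    \<or> (C \<tau> = 0 \<and> (\<forall>j. \<not> exj J \<tau> j) \<and> futj J \<tau> \<and> V \<tau> = V (\<tau> + 1))
    \<or> (C \<tau> = -1 \<and> (\<forall>j. \<not> exj J \<tau> j) \<and> \<not> futj J \<tau> \<and> V \<tau> = 0)"

definition jobsfrom :: "job list \<Rightarrow> schedule \<Rightarrow> real \<Rightarrow> nat set" where
  "jobsfrom J S \<tau> = {i. i < length J \<and> (\<exists>s. S i = Some s \<and> \<tau> \<le> s)}"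

definition costfrom :: "bool \<Rightarrow> job list \<Rightarrow> schedule \<Rightarrow> real \<Rightarrow> real" where
  "costfrom mk J S \<tau> = (if mk then Max (insert 0 ((\<lambda>i. the (S i) + pt (J ! i)) ` jobsfrom J S \<tau>))
                        else (\<Sum>i\<in>jobsfrom J S \<tau>. pt (J ! i)))"

definition free :: "job list \<Rightarrow> schedule \<Rightarrow> real \<Rightarrow> bool" where
  "free J S \<tau> \<longleftrightarrow> (\<forall>i<length J. \<forall>s. S i = Some s \<longrightarrow> \<tau> \<le> s \<or> s + pt (J ! i) \<le> \<tau>)"

lemma finite_jobsfrom[simp]: "finite (jobsfrom J S \<tau>)"
  unfolding jobsfrom_def by simp

lemma costfrom_insert:
  assumes "jobsfrom J S \<tau> = insert i (jobsfrom J S \<tau>')" "i \<notin> jobsfrom J S \<tau>'" "S i = Some s"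
  shows "costfrom mk J S \<tau> = candfR mk s (pt (J ! i)) (costfrom mk J S \<tau>')"
proof (cases mk)
  case True
  have "Max (insert 0 ((\<lambda>i. the (S i) + pt (J ! i)) ` jobsfrom J S \<tau>)) =
        Max (insert (s + pt (J ! i)) (insert 0 ((\<lambda>i. the (S i) + pt (J ! i)) ` jobsfrom J S \<tau>')))"
    using assms by (simp add: insert_commute)
  also have "\<dots> = max (s + pt (J ! i)) (Max (insert 0 ((\<lambda>i. the (S i) + pt (J ! i)) ` jobsfrom J S \<tau>')))"
    by (subst Max_insert) auto
  finally show ?thesis using True by (simp add: costfrom_def candfR_def)
next
  case False
  then show ?thesis using assms by (simp add: costfrom_def candfR_def)
qed

lemma costfrom_empty: "jobsfrom J S \<tau> = {} \<Longrightarrow> costfrom mk J S \<tau> = 0"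
  by (simp add: costfrom_def)

locale setting =
  fixes J :: "job list" and mk :: bool and V C :: "nat \<Rightarrow> int" and K :: nat
  assumes restr: "\<And>j. j < length J \<Longrightarrow> dd J j < aa J j + 2 * tt J j"
  and dK: "\<And>j. j < length J \<Longrightarrow> dd J j \<le> K"
  and good: "\<And>\<tau>. \<tau> \<le> K \<Longrightarrow> goodAt J mk V C \<tau>"
begin

lemma exj_pos: "exj J \<tau> j \<Longrightarrow> tt J j \<ge> 1"
  using restr[of j] by (auto simp: exj_def)

lemma exj_K: "exj J \<tau> j \<Longrightarrow> \<tau> + tt J j \<le> K"
  using dK[of j] by (auto simp: exj_def)

lemma futj_K: "futj J \<tau> \<Longrightarrow> \<tau> + 1 \<le> K"
  using dK by (force simp: futj_def)

section \<open>Lower bound\<close>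

lemma valid_window:
  assumes "feasible J S" "i < length J" "S i = Some s"
  shows "real (aa J i) \<le> s" "s \<le> real (dd J i) - real (tt J i)"
  using assms unfolding feasible_def valid_schedule_def by (auto simp: arr_eq crit_eq)

lemma valid_pos:
  assumes "feasible J S" "i < length J" "S i = Some s"
  shows "tt J i \<ge> 1"
proof -
  have "real (aa J i) \<le> real (dd J i) - real (tt J i)" using valid_window[OF assms] by linarith
  then have "aa J i + tt J i \<le> dd J i" by linarith
  then show ?thesis using restr[OF assms(2)] by linarith
qed

lemma valid_disj:
  assumes "feasible J S" "i < length J" "k < length J" "i \<noteq> k" "S i = Some si" "S k = Some sk"
  shows "{si..<si + pt (J ! i)} \<inter> {sk..<sk + pt (J ! k)} = {}"
  using assms unfolding feasible_def valid_schedule_def by blast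

lemma ex_case_start:
  assumes fe: "feasible J S" and fr: "free J S (real \<tau>)" and ex: "exj J \<tau> j"
  shows "\<exists>i<length J. S i = Some (real \<tau>) \<and> exj J \<tau> i"
proof -
  have jn: "j < length J" using ex by (simp add: exj_def)
  have exe: "executable J S j (real \<tau>)"
    unfolding executable_def
  proof (intro conjI allI impI)
    fix s assume sj: "S j = Some s"
    show "real \<tau> \<le> s"
    proof (rule ccontr)
      assume "\<not> real \<tau> \<le> s"
      then have "s + real (tt J j) \<le> real \<tau>" using fr jn sj unfolding free_def pt_eq by fastforce
      moreover have "real (aa J j) \<le> s" using valid_window[OF fe jn sj] by simp
      ultimately have "aa J j + tt J j \<le> \<tau>" by linarith
      then show False using ex restr[OF jn] by (simp add: exj_def)
    qed
  next
    show "arr (J ! j) \<le> real \<tau>" using ex by (simp add: arr_eq exj_def)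
    show "real \<tau> \<le> crit (J ! j)" using ex by (simp add: crit_eq exj_def)
  qed
  then have "processing J S (real \<tau>)" using fe jn unfolding feasible_def by blast
  then obtain i s where i: "i < length J" "S i = Some s" "s \<le> real \<tau>" "real \<tau> < s + pt (J ! i)"
    unfolding processing_def by blast
  have "s = real \<tau>" using fr i unfolding free_def by force
  moreover have "exj J \<tau> i"
  proof -
    have "real (aa J i) \<le> real \<tau>" "real \<tau> \<le> real (dd J i) - real (tt J i)"
      using valid_window[OF fe i(1,2)] \<open>s = real \<tau>\<close> by auto
    then show ?thesis using i(1) by (simp add: exj_def)
  qed
  ultimately show ?thesis using i by blast
qed

lemma ex_case_split:
  assumes fe: "feasible J S" and fr: "free J S (real \<tau>)" and i: "i < length J" "S i = Some (real \<tau>)"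
  shows "free J S (real (\<tau> + tt J i))"
    "jobsfrom J S (real \<tau>) = insert i (jobsfrom J S (real (\<tau> + tt J i)))"
    "i \<notin> jobsfrom J S (real (\<tau> + tt J i))"
proof -
  have ti: "tt J i \<ge> 1" using valid_pos[OF fe i] .
  have key: "real \<tau> + real (tt J i) \<le> s" if "k < length J" "k \<noteq> i" "S k = Some s" "real \<tau> \<le> s" for k s
  proof (rule ccontr)
    assume nt: "\<not> real \<tau> + real (tt J i) \<le> s"
    have "tt J k \<ge> 1" using valid_pos[OF fe that(1,3)] .
    then have "s \<in> {s..<s + pt (J ! k)}" by (simp add: pt_eq)
    moreover have "s \<in> {real \<tau>..<real \<tau> + pt (J ! i)}" using nt that by (simp add: pt_eq)
    ultimately show False using valid_disj[OF fe i(1) that(1) that(2)[symmetric] i(2) that(3)] by blast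
  qed
  show "free J S (real (\<tau> + tt J i))"
    unfolding free_def
  proof (intro allI impI)
    fix k s assume k: "k < length J" "S k = Some s"
    show "real (\<tau> + tt J i) \<le> s \<or> s + pt (J ! k) \<le> real (\<tau> + tt J i)"
    proof (cases "k = i")
      case True then show ?thesis using k i by (simp add: pt_eq)
    next
      case False
      show ?thesis
      proof (cases "real \<tau> \<le> s")
        case True then show ?thesis using key[OF k(1) False k(2)] by simp
      next
        case False
        then have "s + pt (J ! k) \<le> real \<tau>" using fr k unfolding free_def by force
        then show ?thesis by simp
      qed
    qed
  qed
  show "jobsfrom J S (real \<tau>) = insert i (jobsfrom J S (real (\<tau> + tt J i)))"
    unfolding jobsfrom_def using key i ti by force
  show "i \<notin> jobsfrom J S (real (\<tau> + tt J i))"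
    unfolding jobsfrom_def using i ti by auto
qed

lemma idle_case:
  assumes fe: "feasible J S" and fr: "free J S (real \<tau>)" and nex: "\<forall>j. \<not> exj J \<tau> j"
  shows "free J S (real (\<tau> + 1))" "jobsfrom J S (real \<tau>) = jobsfrom J S (real (\<tau> + 1))"
proof -
  have noin: "\<not> (real \<tau> \<le> s \<and> s < real \<tau> + 1)" if "k < length J" "S k = Some s" for k s
  proof
    assume a: "real \<tau> \<le> s \<and> s < real \<tau> + 1"
    have w: "real (aa J k) \<le> s" "s \<le> real (dd J k) - real (tt J k)" using valid_window[OF fe that] by auto
    have "aa J k \<le> \<tau>" using w a by linarith
    moreover have "\<tau> + tt J k \<le> dd J k" using w a by linarith
    ultimately show False using nex that(1) by (auto simp: exj_def)
  qed
  show "free J S (real (\<tau> + 1))"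
    unfolding free_def
  proof (intro allI impI)
    fix k s assume k: "k < length J" "S k = Some s"
    show "real (\<tau> + 1) \<le> s \<or> s + pt (J ! k) \<le> real (\<tau> + 1)"
      using fr k noin[OF k] unfolding free_def by force
  qed
  show "jobsfrom J S (real \<tau>) = jobsfrom J S (real (\<tau> + 1))"
    unfolding jobsfrom_def using noin by force
qed

lemma lower:
  assumes fe: "feasible J S"
  shows "\<tau> \<le> K \<Longrightarrow> free J S (real \<tau>) \<Longrightarrow> real_of_int (V \<tau>) \<le> costfrom mk J S (real \<tau>)"
proof (induction "K - \<tau>" arbitrary: \<tau> rule: less_induct)
  case less
  note g = good[OF less.prems(1), unfolded goodAt_def]
  show ?case
  proof (cases "\<exists>j. exj J \<tau> j")
    case True
    then obtain j where "exj J \<tau> j" by blast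
    then obtain i where i: "i < length J" "S i = Some (real \<tau>)" "exj J \<tau> i"
      using ex_case_start[OF fe less.prems(2)] by blast
    note sp = ex_case_split[OF fe less.prems(2) i(1,2)]
    have ti: "tt J i \<ge> 1" using exj_pos[OF i(3)] .
    have le: "\<tau> + tt J i \<le> K" using exj_K[OF i(3)] .
    have IH: "real_of_int (V (\<tau> + tt J i)) \<le> costfrom mk J S (real (\<tau> + tt J i))"
      using less.hyps[of "\<tau> + tt J i"] ti le sp(1) by simp
    have "V \<tau> \<le> candf mk \<tau> (tt J i) (V (\<tau> + tt J i))" using g True i(3) by blast
    then have "real_of_int (V \<tau>) \<le> candfR mk (real \<tau>) (real (tt J i)) (real_of_int (V (\<tau> + tt J i)))"
      by (metis candf_real of_int_le_iff)
    also have "\<dots> \<le> candfR mk (real \<tau>) (real (tt J i)) (costfrom mk J S (real (\<tau> + tt J i)))"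
      by (rule candfR_mono[OF IH])
    also have "\<dots> = costfrom mk J S (real \<tau>)"
      using costfrom_insert[OF sp(2) sp(3) i(2)] by (simp add: pt_eq)
    finally show ?thesis .
  next
    case False
    show ?thesis
    proof (cases "futj J \<tau>")
      case True
      have V: "V \<tau> = V (\<tau> + 1)" using g True False by auto
      have nex: "\<forall>j. \<not> exj J \<tau> j" using False by blast
      note ic = idle_case[OF fe less.prems(2) nex]
      have le: "\<tau> + 1 \<le> K" using futj_K[OF True] .
      have "real_of_int (V (\<tau> + 1)) \<le> costfrom mk J S (real (\<tau> + 1))"
        using less.hyps[of "\<tau> + 1"] le ic(1) False by simp
      moreover have "costfrom mk J S (real \<tau>) = costfrom mk J S (real (\<tau> + 1))"
        using ic(2) by (simp only: costfrom_def)
      ultimately show ?thesis using V by simp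
    next
      case nf: False
      have "V \<tau> = 0" using g False nf by auto
      moreover have "0 \<le> costfrom mk J S (real \<tau>)"
        unfolding costfrom_def by (auto intro: sum_nonneg simp: pt_eq)
      ultimately show ?thesis by simp
    qed
  qed
qed


section \<open>Construction\<close>

definition nxt :: "nat \<Rightarrow> nat" where
  "nxt \<sigma> = (if C \<sigma> \<ge> 1 then \<sigma> + tt J (nat (C \<sigma>) - 1) else \<sigma> + 1)"

fun pth :: "nat \<Rightarrow> nat" where
  "pth 0 = 0"
| "pth (Suc k) = (if C (pth k) \<ge> 0 then nxt (pth k) else pth k)"

lemma good_cases:
  assumes "\<tau> \<le> K"
  obtains (job) "C \<tau> \<ge> 1" "exj J \<tau> (nat (C \<tau>) - 1)"
      "V \<tau> = candf mk \<tau> (tt J (nat (C \<tau>) - 1)) (V (\<tau> + tt J (nat (C \<tau>) - 1)))"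
      "\<And>j. exj J \<tau> j \<Longrightarrow> V \<tau> \<le> candf mk \<tau> (tt J j) (V (\<tau> + tt J j))"
  | (idle) "C \<tau> = 0" "\<And>j. \<not> exj J \<tau> j" "futj J \<tau>" "V \<tau> = V (\<tau> + 1)"
  | (stop) "C \<tau> = -1" "\<And>j. \<not> exj J \<tau> j" "\<not> futj J \<tau>" "V \<tau> = 0"
  using good[OF assms] unfolding goodAt_def by blast

lemma nxt_props:
  assumes "\<tau> \<le> K" "C \<tau> \<ge> 0"
  shows "\<tau> < nxt \<tau>" "nxt \<tau> \<le> K"
proof -
  have "(\<tau> < nxt \<tau>) \<and> nxt \<tau> \<le> K"
  proof (cases rule: good_cases[OF assms(1), case_names job idle stop])
    case job
    then show ?thesis using exj_pos[OF job(2)] exj_K[OF job(2)] by (simp add: nxt_def)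
  next
    case idle
    then show ?thesis using futj_K[OF idle(3)] by (simp add: nxt_def)
  next
    case stop
    then show ?thesis using assms by simp
  qed
  then show "\<tau> < nxt \<tau>" "nxt \<tau> \<le> K" by auto
qed

lemma pth_le_K: "pth k \<le> K"
  by (induction k) (auto simp: nxt_props)

lemma pth_mono_Suc: "pth k \<le> pth (Suc k)"
  using nxt_props[OF pth_le_K, of k] by auto

lemma pth_mono: "k1 \<le> k2 \<Longrightarrow> pth k1 \<le> pth k2"
proof (induction k2)
  case 0 then show ?case by simp
next
  case (Suc k2)
  show ?case
  proof (cases "k1 = Suc k2")
    case True then show ?thesis by simp
  next
    case False
    then have "pth k1 \<le> pth k2" using Suc by simp
    then show ?thesis using pth_mono_Suc[of k2] by linarith
  qed
qed

lemma pth_stuck: "C (pth k) < 0 \<Longrightarrow> pth (k + d) = pth k"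
  by (induction d) auto

lemma chain:
  assumes "pth k1 < pth k2"
  shows "C (pth k1) \<ge> 0" "pth (Suc k1) = nxt (pth k1)" "nxt (pth k1) \<le> pth k2"
proof -
  have "k1 < k2"
  proof (rule ccontr)
    assume "\<not> k1 < k2"
    then have "pth k2 \<le> pth k1" using pth_mono[of k2 k1] by simp
    then show False using assms by simp
  qed
  show c: "C (pth k1) \<ge> 0"
  proof (rule ccontr)
    assume "\<not> ?thesis"
    then have "pth (k1 + (k2 - k1)) = pth k1" by (intro pth_stuck) simp
    then show False using assms \<open>k1 < k2\<close> by simp
  qed
  then show "pth (Suc k1) = nxt (pth k1)" by simp
  then show "nxt (pth k1) \<le> pth k2" using pth_mono[of "Suc k1" k2] \<open>k1 < k2\<close> by simp
qed

lemma pth_job: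
  assumes "C (pth k) = int j + 1"
  shows "exj J (pth k) j" "pth (Suc k) = pth k + tt J j"
proof -
  have "nat (C (pth k)) - 1 = j" using assms by simp
  moreover have "exj J (pth k) (nat (C (pth k)) - 1)"
    by (cases rule: good_cases[OF pth_le_K[of k], case_names job idle stop]) (use assms in auto)
  ultimately show "exj J (pth k) j" by simp
  show "pth (Suc k) = pth k + tt J j" using assms by (simp add: nxt_def)
qed

lemma pth_unique:
  assumes "C (pth k1) = int j + 1" "C (pth k2) = int j + 1"
  shows "pth k1 = pth k2"
proof (rule ccontr)
  assume ne: "pth k1 \<noteq> pth k2"
  have *: False if "C (pth a) = int j + 1" "C (pth b) = int j + 1" "pth a < pth b" for a b
  proof -
    have "nxt (pth a) \<le> pth b" using chain(3)[OF that(3)] .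
    then have "pth a + tt J j \<le> pth b" using that(1) by (simp add: nxt_def)
    moreover have "exj J (pth a) j" "exj J (pth b) j" using pth_job that by auto
    ultimately show False using restr[of j] by (auto simp: exj_def)
  qed
  show False using ne *[OF assms] *[OF assms(2,1)] by linarith
qed

definition Sch :: schedule where
  "Sch j = (if \<exists>k. C (pth k) = int j + 1 then Some (real (pth (SOME k. C (pth k) = int j + 1))) else None)"

lemma Sch_Some: "Sch j = Some s \<longleftrightarrow> (\<exists>k. C (pth k) = int j + 1 \<and> s = real (pth k))"
proof
  assume a: "Sch j = Some s"
  then have ex: "\<exists>k. C (pth k) = int j + 1" unfolding Sch_def by (auto split: if_splits)
  then have "s = real (pth (SOME k. C (pth k) = int j + 1))" using a unfolding Sch_def by simp
  moreover have "C (pth (SOME k. C (pth k) = int j + 1)) = int j + 1" using someI_ex[OF ex] .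
  ultimately show "\<exists>k. C (pth k) = int j + 1 \<and> s = real (pth k)" by blast
next
  assume "\<exists>k. C (pth k) = int j + 1 \<and> s = real (pth k)"
  then obtain k where k: "C (pth k) = int j + 1" "s = real (pth k)" by blast
  then have "C (pth (SOME k. C (pth k) = int j + 1)) = int j + 1" by (intro someI_ex[of "\<lambda>k. C (pth k) = int j + 1"]) blast
  then have "pth (SOME k. C (pth k) = int j + 1) = pth k" using pth_unique k(1) by blast
  then show "Sch j = Some s" unfolding Sch_def using k by auto
qed

lemma Sch_None: "Sch j = None \<longleftrightarrow> (\<forall>k. C (pth k) \<noteq> int j + 1)"
  unfolding Sch_def by auto

lemma Sch_valid: "valid_schedule J Sch"
proof -
  have A: "arr (J ! i) \<le> s \<and> s \<le> crit (J ! i)" if i: "i < length J" "Sch i = Some s" for i s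
  proof -
    obtain k where k: "C (pth k) = int i + 1" "s = real (pth k)" using i Sch_Some by blast
    have "exj J (pth k) i" using pth_job(1)[OF k(1)] .
    then show ?thesis using k(2) by (simp add: exj_def arr_eq crit_eq)
  qed
  have B: "{si..<si + pt (J ! i)} \<inter> {sj..<sj + pt (J ! j)} = {}"
    if ij: "i \<noteq> j" "Sch i = Some si" "Sch j = Some sj" for i j si sj
  proof -
    obtain k1 where k1: "C (pth k1) = int i + 1" "si = real (pth k1)" using ij Sch_Some by blast
    obtain k2 where k2: "C (pth k2) = int j + 1" "sj = real (pth k2)" using ij Sch_Some by blast
    have ne: "pth k1 \<noteq> pth k2" using k1 k2 ij(1) by auto
    have d: "{real (pth a)..<real (pth a) + pt (J ! x)} \<inter> {real (pth b)..<real (pth b) + pt (J ! y)} = {}"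
      if "C (pth a) = int x + 1" "pth a < pth b" for a b x y
    proof -
      have "pth a + tt J x \<le> pth b" using chain(3)[OF that(2)] that(1) by (simp add: nxt_def)
      then show ?thesis by (auto simp: pt_eq)
    qed
    show ?thesis
    proof (cases "pth k1 < pth k2")
      case True then show ?thesis using d[OF k1(1) True] k1 k2 by simp
    next
      case False
      then have "pth k2 < pth k1" using ne by simp
      then show ?thesis using d[OF k2(1), of k1 i] k1 k2 by blast
    qed
  qed
  show ?thesis unfolding valid_schedule_def using A B by blast
qed

lemma Sch_busy:
  assumes np: "\<not> processing J Sch \<tau>" and i: "i < length J" and ex: "executable J Sch i \<tau>"
  shows False
proof -
  have w: "real (aa J i) \<le> \<tau>" "\<tau> \<le> real (dd J i) - real (tt J i)"
    using ex by (auto simp: executable_def arr_eq crit_eq)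
  define M where "M = pth ` {k. real (pth k) \<le> \<tau>}"
  have "M \<subseteq> {0..K}" unfolding M_def using pth_le_K by auto
  then have finM: "finite M" using finite_subset by blast
  have "real (pth 0) \<le> \<tau>" using w by simp
  then have "pth 0 \<in> M" unfolding M_def by blast
  then have ne: "M \<noteq> {}" by blast
  have "Max M \<in> M" using finM ne by (rule Max_in)
  then obtain k0 where k0: "pth k0 = Max M" "real (pth k0) \<le> \<tau>" unfolding M_def by auto
  have maxp: "pth k \<le> pth k0" if "real (pth k) \<le> \<tau>" for k
  proof -
    have "pth k \<in> M" unfolding M_def using that by blast
    then show ?thesis using Max_ge[OF finM] k0(1) by simp
  qed
  let ?s = "pth k0"
  show False
  proof (cases rule: good_cases[OF pth_le_K[of k0], case_names job idle stop])
    case job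
    define j where "j = nat (C ?s) - 1"
    have cj: "C ?s = int j + 1" using job(1) by (simp add: j_def)
    have jn: "j < length J" using job(2) by (simp add: exj_def j_def)
    have "Sch j = Some (real ?s)" using Sch_Some cj by blast
    then have "\<not> (real ?s \<le> \<tau> \<and> \<tau> < real ?s + pt (J ! j))" using np jn unfolding processing_def by blast
    then have "real ?s + real (tt J j) \<le> \<tau>" using k0(2) by (simp add: pt_eq)
    then have "real (pth (Suc k0)) \<le> \<tau>" using pth_job(2)[OF cj] by simp
    then have "pth (Suc k0) \<le> ?s" by (rule maxp)
    moreover have "?s < pth (Suc k0)" using nxt_props[OF pth_le_K[of k0]] job(1) by simp
    ultimately show False by simp
  next
    case idle
    have "pth (Suc k0) = ?s + 1" using idle(1) by (simp add: nxt_def)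
    then have lt: "\<tau> < real ?s + 1" using maxp[of "Suc k0"] by force
    have "real (aa J i) < real ?s + 1" using w(1) lt by simp
    then have a1: "aa J i \<le> ?s" by simp
    have "real ?s + real (tt J i) \<le> real (dd J i)" using w(2) k0(2) by simp
    then have a2: "?s + tt J i \<le> dd J i" by (simp only: of_nat_add[symmetric] of_nat_le_iff)
    show False using idle(2)[of i] i a1 a2 by (simp add: exj_def)
  next
    case stop
    have a2: "?s + tt J i \<le> dd J i"
    proof -
      have "real ?s + real (tt J i) \<le> real (dd J i)" using w(2) k0(2) by simp
      then show ?thesis by (simp only: of_nat_add[symmetric] of_nat_le_iff)
    qed
    show False
    proof (cases "aa J i \<le> ?s")
      case True
      then show False using stop(2)[of i] i a2 by (simp add: exj_def)
    next
      case False
      have "real (aa J i) + real (tt J i) \<le> real (dd J i)" using w by simp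
      then have "aa J i + tt J i \<le> dd J i" by (simp only: of_nat_add[symmetric] of_nat_le_iff)
      then show False using stop(3) i False by (auto simp: futj_def)
    qed
  qed
qed

lemma Sch_feasible: "feasible J Sch"
proof -
  have "\<not> (\<exists>i<length J. executable J Sch i \<tau>)" if "\<not> processing J Sch \<tau>" for \<tau>
  proof
    assume "\<exists>i<length J. executable J Sch i \<tau>"
    then obtain i where "i < length J" "executable J Sch i \<tau>" by blast
    then show False using Sch_busy[OF that] by blast
  qed
  then show ?thesis unfolding feasible_def using Sch_valid by blast
qed

lemma jobsfrom_Sch: "jobsfrom J Sch (real \<sigma>) = {j. j < length J \<and> (\<exists>k. C (pth k) = int j + 1 \<and> \<sigma> \<le> pth k)}"
proof -
  have "(\<exists>s. Sch j = Some s \<and> real \<sigma> \<le> s) \<longleftrightarrow> (\<exists>k. C (pth k) = int j + 1 \<and> \<sigma> \<le> pth k)" for j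
  proof
    assume "\<exists>s. Sch j = Some s \<and> real \<sigma> \<le> s"
    then obtain s where s: "Sch j = Some s" "real \<sigma> \<le> s" by blast
    then obtain k where "C (pth k) = int j + 1" "s = real (pth k)" using Sch_Some by blast
    then show "\<exists>k. C (pth k) = int j + 1 \<and> \<sigma> \<le> pth k" using s(2) by auto
  next
    assume "\<exists>k. C (pth k) = int j + 1 \<and> \<sigma> \<le> pth k"
    then obtain k where k: "C (pth k) = int j + 1" "\<sigma> \<le> pth k" by blast
    then have "Sch j = Some (real (pth k))" using Sch_Some by blast
    then show "\<exists>s. Sch j = Some s \<and> real \<sigma> \<le> s" using k(2) by auto
  qed
  then show ?thesis unfolding jobsfrom_def by blast
qed

lemma Sch_cost: "costfrom mk J Sch (real (pth k)) = real_of_int (V (pth k))"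
proof (induction "K - pth k" arbitrary: k rule: less_induct)
  case less
  let ?s = "pth k"
  show ?case
  proof (cases rule: good_cases[OF pth_le_K[of k], case_names job idle stop])
    case job
    define j where "j = nat (C ?s) - 1"
    have cj: "C ?s = int j + 1" using job(1) by (simp add: j_def)
    have jn: "j < length J" using job(2) by (simp add: exj_def j_def)
    have nk: "pth (Suc k) = ?s + tt J j" using pth_job(2)[OF cj] .
    have lt: "?s < pth (Suc k)" using nxt_props[OF pth_le_K[of k]] job(1) by simp
    have IH: "costfrom mk J Sch (real (pth (Suc k))) = real_of_int (V (pth (Suc k)))"
      using less.hyps[of "Suc k"] lt pth_le_K[of "Suc k"] by simp
    have alt: "x = j \<or> pth (Suc k) \<le> pth k'" if "C (pth k') = int x + 1" "?s \<le> pth k'" for x k'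
    proof (cases "pth k' = ?s")
      case True then show ?thesis using that cj by simp
    next
      case False
      then have lt2: "?s < pth k'" using that by simp
      show ?thesis using chain[OF lt2] by simp
    qed
    have js: "jobsfrom J Sch (real ?s) = insert j (jobsfrom J Sch (real (pth (Suc k))))"
    proof (intro set_eqI iffI)
      fix x assume "x \<in> jobsfrom J Sch (real ?s)"
      then obtain k' where k': "x < length J" "C (pth k') = int x + 1" "?s \<le> pth k'"
        unfolding jobsfrom_Sch by blast
      show "x \<in> insert j (jobsfrom J Sch (real (pth (Suc k))))"
        using alt[OF k'(2,3)] k'(1,2) unfolding jobsfrom_Sch by blast
    next
      fix x assume x: "x \<in> insert j (jobsfrom J Sch (real (pth (Suc k))))"
      show "x \<in> jobsfrom J Sch (real ?s)"
      proof (cases "x = j")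
        case True then show ?thesis unfolding jobsfrom_Sch using jn cj by blast
      next
        case False
        then obtain k' where k': "x < length J" "C (pth k') = int x + 1" "pth (Suc k) \<le> pth k'"
          using x unfolding jobsfrom_Sch by blast
        then have "?s \<le> pth k'" using lt by simp
        then show ?thesis unfolding jobsfrom_Sch using k' by blast
      qed
    qed
    have jn2: "j \<notin> jobsfrom J Sch (real (pth (Suc k)))"
    proof
      assume "j \<in> jobsfrom J Sch (real (pth (Suc k)))"
      then obtain k' where k': "C (pth k') = int j + 1" "pth (Suc k) \<le> pth k'"
        unfolding jobsfrom_Sch by blast
      have "pth k' = ?s" using pth_unique[OF k'(1) cj] .
      then show False using k'(2) lt by simp
    qed
    have sj: "Sch j = Some (real ?s)" using Sch_Some cj by blast
    have "costfrom mk J Sch (real ?s) = candfR mk (real ?s) (pt (J ! j)) (costfrom mk J Sch (real (pth (Suc k))))"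
      by (rule costfrom_insert[OF js jn2 sj])
    also have "\<dots> = real_of_int (candf mk ?s (tt J j) (V (pth (Suc k))))"
      using IH by (simp add: candf_real pt_eq)
    also have "\<dots> = real_of_int (V ?s)" using job(3) nk by (simp add: j_def)
    finally show ?thesis .
  next
    case idle
    have nk: "pth (Suc k) = ?s + 1" using idle(1) by (simp add: nxt_def)
    have IH: "costfrom mk J Sch (real (pth (Suc k))) = real_of_int (V (pth (Suc k)))"
      using less.hyps[of "Suc k"] nk pth_le_K[of "Suc k"] by simp
    have alt: "pth (Suc k) \<le> pth k'" if "C (pth k') = int x + 1" "?s \<le> pth k'" for x k'
    proof (cases "pth k' = ?s")
      case True then show ?thesis using that idle(1) by simp
    next
      case False
      then have lt2: "?s < pth k'" using that by simp
      show ?thesis using chain[OF lt2] by simp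
    qed
    have "jobsfrom J Sch (real ?s) = jobsfrom J Sch (real (pth (Suc k)))"
    proof (intro set_eqI iffI)
      fix x assume "x \<in> jobsfrom J Sch (real ?s)"
      then obtain k' where k': "x < length J" "C (pth k') = int x + 1" "?s \<le> pth k'"
        unfolding jobsfrom_Sch by blast
      show "x \<in> jobsfrom J Sch (real (pth (Suc k)))"
        using alt[OF k'(2,3)] k'(1,2) unfolding jobsfrom_Sch by blast
    next
      fix x assume "x \<in> jobsfrom J Sch (real (pth (Suc k)))"
      then obtain k' where k': "x < length J" "C (pth k') = int x + 1" "pth (Suc k) \<le> pth k'"
        unfolding jobsfrom_Sch by blast
      then have "?s \<le> pth k'" using nk by simp
      then show "x \<in> jobsfrom J Sch (real ?s)" unfolding jobsfrom_Sch using k' by blast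
    qed
    moreover have "costfrom mk J Sch (real ?s) = costfrom mk J Sch (real (pth (Suc k)))"
      using calculation by (simp only: costfrom_def)
    ultimately show ?thesis using IH idle(4) nk by simp
  next
    case stop
    have "jobsfrom J Sch (real ?s) = {}"
    proof -
      have False if "C (pth k') = int x + 1" "?s \<le> pth k'" for x k'
      proof (cases "pth k' = ?s")
        case True then show ?thesis using that stop(1) by simp
      next
        case False
        then have lt2: "?s < pth k'" using that by simp
        show ?thesis using chain(1)[OF lt2] stop(1) by simp
      qed
      then show ?thesis unfolding jobsfrom_Sch by blast
    qed
    then show ?thesis using stop(4) by (simp add: costfrom_empty)
  qed
qed

end

section \<open>Objectives\<close>

lemma valid_nonneg: "valid_schedule J S \<Longrightarrow> i < length J \<Longrightarrow> S i = Some s \<Longrightarrow> 0 \<le> s"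
  unfolding valid_schedule_def by (metis arr_def of_nat_0_le_iff order.trans)

lemma jobsfrom0: "valid_schedule J S \<Longrightarrow> jobsfrom J S 0 = {i. i < length J \<and> S i \<noteq> None}"
  unfolding jobsfrom_def using valid_nonneg by fastforce

lemma objective_eq:
  assumes "valid_schedule J S" "obj \<in> {1, 2, 3::nat}"
  shows "lbp_objective obj J S = costfrom (obj = 3) J S 0"
proof -
  have j0: "jobsfrom J S 0 = {i. i < length J \<and> S i \<noteq> None}" using jobsfrom0[OF assms(1)] .
  have "{s + pt (J ! i) | i s. i < length J \<and> S i = Some s} = (\<lambda>i. the (S i) + pt (J ! i)) ` jobsfrom J S 0"
    unfolding j0 by force
  then show ?thesis using assms(2) j0
    by (auto simp: lbp_objective_def total_work_def weighted_completed_def makespan_def executed_def costfrom_def)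
qed


lemma (in setting) optimal:
  assumes "obj \<in> {1, 2, 3::nat}" "mk = (obj = 3)"
  shows "lbp_optimal (lbp_objective obj) J Sch"
  unfolding lbp_optimal_def
proof (intro conjI allI impI)
  show fs: "feasible J Sch" by (rule Sch_feasible)
  fix S' assume fe: "feasible J S'"
  have v1: "valid_schedule J Sch" "valid_schedule J S'" using fs fe by (auto simp: feasible_def)
  have "lbp_objective obj J Sch = costfrom mk J Sch (real (pth 0))"
    using objective_eq[OF v1(1) assms(1)] assms(2) by simp
  also have "\<dots> = real_of_int (V 0)" using Sch_cost[of 0] by simp
  also have "\<dots> \<le> costfrom mk J S' (real 0)"
  proof (rule lower[OF fe])
    show "0 \<le> K" by simp
    show "free J S' (real 0)" unfolding free_def using valid_nonneg[OF v1(2)] by simp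
  qed
  also have "\<dots> = lbp_objective obj J S'"
    using objective_eq[OF v1(2) assms(1)] assms(2) by simp
  finally show "lbp_objective obj J Sch \<le> lbp_objective obj J S'" .
qed

lemma feasible_cong:
  assumes "\<And>i. i < length J \<Longrightarrow> S' i = S i"
  shows "feasible J S' \<longleftrightarrow> feasible J S"
  unfolding feasible_def valid_schedule_def processing_def executable_def
  using assms by (simp cong: conj_cong imp_cong)

lemma objective_cong:
  assumes "\<And>i. i < length J \<Longrightarrow> S' i = S i"
  shows "lbp_objective obj J S' = lbp_objective obj J S"
proof -
  have e: "executed J S' = executed J S" unfolding executed_def using assms by auto
  have w: "{i. i < length J \<and> (\<exists>s. S' i = Some s)} = {i. i < length J \<and> (\<exists>s. S i = Some s)}"
    using assms by auto
  have m: "{s + pt (J ! i) | i s. i < length J \<and> S' i = Some s} = {s + pt (J ! i) | i s. i < length J \<and> S i = Some s}"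
    using assms by force
  show ?thesis by (simp add: lbp_objective_def total_work_def weighted_completed_def makespan_def e w m)
qed

lemma optimal_cong:
  assumes "lbp_optimal (lbp_objective obj) J S" "\<And>i. i < length J \<Longrightarrow> S' i = S i"
  shows "lbp_optimal (lbp_objective obj) J S'"
  using assms feasible_cong[OF assms(2)] objective_cong[OF assms(2)] unfolding lbp_optimal_def by simp


definition G :: "nat \<Rightarrow> nat \<Rightarrow> int" where "G x k = - (32 + 8 * int x + int k)"

lemma G_neg: "G x k < 0" by (simp add: G_def)
lemma G_le: "G x k \<le> -32" by (simp add: G_def)
lemma G_eq_iff[simp]: "k < 8 \<Longrightarrow> l < 8 \<Longrightarrow> G x k = G y l \<longleftrightarrow> x = y \<and> k = l"
  unfolding G_def by presburger
lemma G_ne_num[simp]: "G x k \<noteq> numeral w" "G x k \<noteq> 0" "G x k \<noteq> 1" "numeral w \<noteq> G x k" "0 \<noteq> G x k" "1 \<noteq> G x k"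
  using G_neg[of x k] by auto
lemma G_ne_negnum[simp]: "numeral w \<le> (31::int) \<Longrightarrow> G x k \<noteq> - numeral w" "numeral w \<le> (31::int) \<Longrightarrow> - numeral w \<noteq> G x k"
  unfolding G_def by linarith+
lemma G_sub1[simp]: "G x 0 - 1 = G x 1" "G x 1 - 1 = G x 2" "G x (Suc 0) - 1 = G x 2" "G x 2 - 1 = G x 3" "G x 3 - 1 = G x 4"
  "G x 5 - 1 = G x 6" by (simp_all add: G_def)
lemma G_sub5[simp]: "G x 3 - 5 = G (Suc x) 0" by (simp add: G_def)
lemma G_sub7[simp]: "G x 4 - 7 = G (Suc x) 3" by (simp add: G_def)
lemma G_sub6[simp]: "G x 2 - 6 = G (Suc x) 0" by (simp add: G_def)
lemma G_sub8[simp]: "G x k - 8 = G (Suc x) k" by (simp add: G_def)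
lemma G_sub8mul[simp]: "G x k - 8 * int y = G (x + y) k" by (simp add: G_def)
lemma G_c0[simp]: "- 32 - 8 * int x = G x 0" by (simp add: G_def)
lemma G_c3[simp]: "- 35 - 8 * int x = G x 3" by (simp add: G_def)
lemma G_c5[simp]: "- 37 - 8 * int x = G x 5" by (simp add: G_def)
lemma G_c6[simp]: "- 38 - 8 * int x = G x 6" by (simp add: G_def)
lemma G_ne_nonneg: "0 \<le> a \<Longrightarrow> G x k \<noteq> a" using G_neg[of x k] by auto
lemma eight_mul[simp]: "(a::int) + a + (a + a) + (a + a + (a + a)) = 8 * a" by simp

fun seqs :: "cmd list \<Rightarrow> cmd" where
  "seqs [] = Skip"
| "seqs (c # cs) = Seq c (seqs cs)"

lemma clen_seqs_append: "clen (seqs (xs @ ys)) = clen (seqs xs) + clen (seqs ys)"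
  by (induction xs) auto

lemma wp_seqs_Nil[simp]: "wp (seqs []) Q = Q" by simp
lemma wp_seqs_Cons[simp]: "wp (seqs (c # cs)) Q = wp c (wp (seqs cs) Q)" by simp
lemma wp_seqs_append[simp]: "wp (seqs (xs @ ys)) Q = wp (seqs xs) (wp (seqs ys) Q)"
  by (induction xs arbitrary: Q) auto

lemma wp_mono: "wp c Q m k \<Longrightarrow> (\<And>m k. Q m k \<Longrightarrow> Q' m k) \<Longrightarrow> wp c Q' m k"
proof (induction c arbitrary: Q Q' m k)
  case (IfLe i j a b)
  then show ?case by (auto split: if_splits)
qed auto

lemma hoare_seqs_app:
  "(\<And>m k. P m k \<Longrightarrow> wp (seqs xs) R m k) \<Longrightarrow> hoare R (seqs ys) Q \<Longrightarrow> hoare P (seqs (xs @ ys)) Q"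
proof (induction xs arbitrary: P)
  case Nil
  then show ?case by (auto intro: hoare_conseq)
next
  case (Cons x xs)
  have "hoare P x (wp (seqs xs) R)" using Cons.prems(1) by (intro hoare_wpI) simp
  moreover have "hoare (wp (seqs xs) R) (seqs (xs @ ys)) Q" using Cons.IH Cons.prems(2) by blast
  ultimately show ?case by (simp add: hoare_seq)
qed

lemma hoare_seqs_one: "hoare P c Q \<Longrightarrow> hoare P (seqs [c]) Q"
  by (simp add: hoare_seq hoare_wpI)

lemma hoare_seqs_cons: "hoare P c R \<Longrightarrow> hoare R (seqs cs) Q \<Longrightarrow> hoare P (seqs (c # cs)) Q"
  by (simp add: hoare_seq)

abbreviation "iC r c \<equiv> Basic (Const r c)"
abbreviation "iA r a b \<equiv> Basic (Add r a b)"
abbreviation "iS r a b \<equiv> Basic (Sub r a b)"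
abbreviation "iL r a \<equiv> Basic (LoadI r a)"
abbreviation "iT a b \<equiv> Basic (StoreI a b)"

lemma wp_rep_add[simp]: "r \<noteq> s \<Longrightarrow> wp (seqs (replicate k (iA r r s))) Q m c =
    Q (m(int r := m (int r) + int k * m (int s))) (c + k)"
proof (induction k arbitrary: m c)
  case 0 then show ?case by simp
next
  case (Suc k)
  let ?m1 = "m(int r := m (int r) + m (int s))"
  have e: "?m1(int r := ?m1 (int r) + int k * ?m1 (int s)) = m(int r := m (int r) + int (Suc k) * m (int s))"
    using Suc.prems by (auto simp: fun_eq_iff algebra_simps)
  have "wp (seqs (replicate (Suc k) (iA r r s))) Q m c = wp (seqs (replicate k (iA r r s))) Q ?m1 (c + 1)"
    by simp
  also have "\<dots> = Q (?m1(int r := ?m1 (int r) + int k * ?m1 (int s))) (c + 1 + k)"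
    by (rule Suc.IH[OF Suc.prems])
  also have "\<dots> = Q (m(int r := m (int r) + int (Suc k) * m (int s))) (c + Suc k)"
    by (simp only: e) simp
  finally show ?case .
qed

lemma wp_rep_sub[simp]: "r \<noteq> s \<Longrightarrow> wp (seqs (replicate k (iS r r s))) Q m c =
    Q (m(int r := m (int r) - int k * m (int s))) (c + k)"
proof (induction k arbitrary: m c)
  case 0 then show ?case by simp
next
  case (Suc k)
  let ?m1 = "m(int r := m (int r) - m (int s))"
  have e: "?m1(int r := ?m1 (int r) - int k * ?m1 (int s)) = m(int r := m (int r) - int (Suc k) * m (int s))"
    using Suc.prems by (auto simp: fun_eq_iff algebra_simps)
  have "wp (seqs (replicate (Suc k) (iS r r s))) Q m c = wp (seqs (replicate k (iS r r s))) Q ?m1 (c + 1)"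
    by simp
  also have "\<dots> = Q (?m1(int r := ?m1 (int r) - int k * ?m1 (int s))) (c + 1 + k)"
    by (rule Suc.IH[OF Suc.prems])
  also have "\<dots> = Q (m(int r := m (int r) - int (Suc k) * m (int s))) (c + Suc k)"
    by (simp only: e) simp
  finally show ?case .
qed

section \<open>The program\<close>

definition boot1 :: cmd where
  "boot1 = seqs (replicate 24 (iA 1 1 0) @ [iS 1 0 1])"

definition boot2 :: cmd where
  "boot2 = seqs ([iT 1 2, iC 2 (-1), iT 2 0, iC 0 0, iS 0 0 1, iL 2 2] @ replicate 23 (iS 0 0 2) @
     [iC 2 (-2), iT 2 0, iL 0 1, iC 2 (-3), iT 2 0, iC 0 0, iT 1 0] @
     concat (map (\<lambda>x. [iC 0 (- (1 + int x)), iT 0 x]) [3..<21]))"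

definition initregs :: cmd where
  "initregs = seqs [iC 0 0, iC 1 1, iC 2 (-1), iL 2 2]"

definition copyrd :: "nat \<Rightarrow> cmd" where
  "copyrd r = seqs [IfLe 4 16 (seqs [iC 15 (-1), iS 15 15 4]) (iA 15 4 0), iL r 15]"

definition copybody :: cmd where
  "copybody = seqs [iC 16 20, copyrd 6, iA 4 4 1, copyrd 7, iA 4 4 1, copyrd 8, iA 4 4 1,
                    iT 5 6, iS 5 5 1, iT 5 7, iS 5 5 1, iT 5 8, iC 16 6, iS 5 5 16, iA 3 3 1]"

definition copy :: cmd where
  "copy = seqs [iC 3 1, iC 4 1, iC 5 (G 0 0), WhileLe 3 2 copybody]"

definition kbody :: cmd where
  "kbody = seqs [iL 8 5, IfLe 9 8 (iA 9 8 0) Skip, iC 16 8, iS 5 5 16, iA 3 3 1]"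

definition kloop :: cmd where
  "kloop = seqs [iC 9 0, iC 3 1, iC 5 (G 0 2), WhileLe 3 2 kbody]"

definition candcode :: "bool \<Rightarrow> cmd" where
  "candcode mk = (if mk then seqs [iA 18 10 6, IfLe 18 17 (iA 18 17 0) Skip] else iA 18 6 17)"

definition exbranch :: "bool \<Rightarrow> cmd" where
  "exbranch mk = seqs [iA 16 6 6, iA 16 16 16, iA 16 16 16,
     iC 17 (-37), iA 19 10 10, iA 19 19 19, iA 19 19 19, iS 17 17 19, iS 17 17 16, iL 17 17,
     candcode mk,
     IfLe 1 11 (IfLe 13 18 Skip (seqs [iA 13 18 0, iS 14 3 1])) (seqs [iC 11 1, iA 13 18 0, iS 14 3 1])]"

definition inner :: "bool \<Rightarrow> cmd" where
  "inner mk = seqs [iL 6 5, iS 15 5 1, iL 7 15, iS 15 15 1, iL 8 15,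
     IfLe 7 10 (seqs [iA 15 10 6, IfLe 15 8 (exbranch mk) Skip]) (seqs [iA 15 7 6, IfLe 15 8 (iA 12 1 0) Skip]),
     iC 16 8, iS 5 5 16, iA 3 3 1]"

definition after :: cmd where
  "after = seqs [iA 19 10 10, iA 19 19 19, iA 19 19 19, iC 17 (-37), iS 17 17 19, iS 18 17 1,
     IfLe 1 11 (seqs [iT 17 13, iA 15 14 1, iT 18 15])
       (IfLe 1 12 (seqs [iC 16 8, iS 15 17 16, iL 15 15, iT 17 15, iT 18 0])
                  (seqs [iT 17 0, iC 15 (-1), iT 18 15]))]"

definition dpbody :: "bool \<Rightarrow> cmd" where
  "dpbody mk = seqs [iC 11 0, iC 12 0, iC 3 1, iC 5 (G 0 0), WhileLe 3 2 (inner mk), after, iS 10 10 1]"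

definition dp :: "bool \<Rightarrow> cmd" where
  "dp mk = seqs [iA 10 9 0, WhileLe 0 10 (dpbody mk)]"

definition rbody :: cmd where
  "rbody = seqs [IfLe 1 15 (seqs [iS 14 15 1, iA 16 14 14, iA 16 16 16, iA 16 16 16, iC 18 (-35), iS 18 18 16,
                    iT 18 1, iS 18 18 1, iT 18 10, iC 19 (-32), iS 19 19 16, iL 6 19, iA 10 10 6])
                  (iA 10 10 1),
                 iA 19 10 10, iA 19 19 19, iA 19 19 19, iC 17 (-38), iS 17 17 19, iL 15 17]"

definition recon :: cmd where
  "recon = seqs [iC 10 0, iC 17 (G 0 6), iL 15 17, WhileLe 0 15 rbody]"

definition obody :: cmd where
  "obody = seqs [iL 15 5, iT 4 15, iA 4 4 1, iS 5 5 1, iL 15 5, iT 4 15, iA 4 4 1, iC 16 7, iS 5 5 16, iA 3 3 1]"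

definition outloop :: cmd where
  "outloop = seqs [iC 3 11, iC 4 21, iC 5 (G 10 3), WhileLe 3 2 obody]"

definition final :: cmd where
  "final = seqs (concat (map (\<lambda>i. [iC (1 + 2 * i) (G i 3), iL (1 + 2 * i) (1 + 2 * i),
                                   iC (2 + 2 * i) (G i 4), iL (2 + 2 * i) (2 + 2 * i)]) [0..<10]))"

definition main :: "bool \<Rightarrow> cmd" where
  "main mk = seqs [boot2, initregs, copy, kloop, dp mk, recon, outloop, final]"

definition prog :: "bool \<Rightarrow> cmd" where
  "prog mk = Seq boot1 (IfLe 0 1 Skip (main mk))"

lemma init_0: "initial_mem J 0 = int (length J)"
  by (simp add: initial_mem_def)

lemma init_neg: "x < 0 \<Longrightarrow> initial_mem J x = 0"
  by (simp add: initial_mem_def)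

lemma init_nonneg: "initial_mem J x \<ge> 0"
  by (simp add: initial_mem_def Let_def)

lemma init_field:
  assumes "i < length J" "f < 3"
  shows "initial_mem J (1 + 3 * int i + int f) =
     (if f = 0 then int (tt J i) else if f = 1 then int (aa J i) else int (dd J i))"
proof -
  have d: "(3 * int i + int f) div 3 = int i" "(3 * int i + int f) mod 3 = int f" using assms(2) by auto
  have "1 \<le> 1 + 3 * int i + int f" by simp
  moreover have "1 + 3 * int i + int f \<le> 3 * int (length J)" using assms by linarith
  ultimately show ?thesis using d assms(2)
    by (auto simp: initial_mem_def Let_def tt_def aa_def dd_def)
qed

locale run =
  fixes J :: "job list" and mk :: bool
  assumes restrJ: "\<forall>j\<in>set J. lbp_restricted j"
begin

abbreviation "n \<equiv> length J"
abbreviation "m0 \<equiv> initial_mem J"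

lemma restr: "j < n \<Longrightarrow> dd J j < aa J j + 2 * tt J j"
  using restrJ nth_mem[of j J] unfolding lbp_restricted_def dd_def aa_def tt_def by fastforce

definition postboot :: "mem \<Rightarrow> bool" where
  "postboot m \<longleftrightarrow> (\<forall>x. 0 \<le> x \<and> x \<le> 20 \<longrightarrow> m (-1 - x) = m0 x) \<and> (\<forall>x. 21 \<le> x \<longrightarrow> m x = m0 x) \<and>
                   (\<forall>y. y \<le> -22 \<longrightarrow> m y = 0)"

lemma boot2_ok:
  assumes "m = m0(1 := - (m0 1 + 23 * int n))" "n \<ge> 1"
  shows "wp boot2 (\<lambda>m k. postboot m \<and> k = c + 72) m c"
proof -
  have a: "m0 1 \<ge> 0" by (rule init_nonneg)
  have n0: "m0 0 = int n" by (rule init_0)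
  show ?thesis
    unfolding boot2_def postboot_def using assms a n0
    apply (simp add: upt_rec)
    apply (intro conjI allI impI)
     apply presburger
    apply (simp add: init_neg)
    done
qed


definition inpok :: "mem \<Rightarrow> bool" where
  "inpok m \<longleftrightarrow> (\<forall>x. 0 \<le> x \<and> x \<le> 20 \<longrightarrow> m (-1 - x) = m0 x) \<and> (\<forall>x. 21 \<le> x \<longrightarrow> m x = m0 x)"

definition zero3 :: "mem \<Rightarrow> bool" where
  "zero3 m \<longleftrightarrow> (\<forall>j. m (G j 3) = 0)"

definition regs :: "mem \<Rightarrow> bool" where
  "regs m \<longleftrightarrow> m 0 = 0 \<and> m 1 = 1 \<and> m 2 = int n"

definition jobsto :: "nat \<Rightarrow> mem \<Rightarrow> bool" where
  "jobsto i m \<longleftrightarrow> (\<forall>j<i. m (G j 0) = int (tt J j) \<and> m (G j 1) = int (aa J j) \<and> m (G j 2) = int (dd J j))"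

lemma inpok_upd_reg[simp]: "0 \<le> a \<Longrightarrow> a \<le> 20 \<Longrightarrow> inpok (m(a := v)) = inpok m"
  unfolding inpok_def by auto
lemma inpok_upd_neg[simp]: "a \<le> -22 \<Longrightarrow> inpok (m(a := v)) = inpok m"
  unfolding inpok_def by auto
lemma G_le22[simp]: "G x k \<le> -22" using G_le[of x k] by simp
lemma zero3_upd_reg[simp]: "0 \<le> a \<Longrightarrow> zero3 (m(a := v)) = zero3 m"
  unfolding zero3_def by (auto simp: G_ne_nonneg)
lemma zero3_upd_G[simp]: "k < 8 \<Longrightarrow> k \<noteq> 3 \<Longrightarrow> zero3 (m(G x k := v)) = zero3 m"
  unfolding zero3_def by auto
lemma jobsto_upd_reg[simp]: "0 \<le> a \<Longrightarrow> jobsto i (m(a := v)) = jobsto i m"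
  unfolding jobsto_def by (auto simp: G_ne_nonneg)
lemma jobsto_upd_G[simp]: "k < 8 \<Longrightarrow> 3 \<le> k \<Longrightarrow> jobsto i (m(G x k := v)) = jobsto i m"
  unfolding jobsto_def by auto

lemma jobsto_upd_high[simp]: "i \<le> x \<Longrightarrow> k < 8 \<Longrightarrow> jobsto i (m(G x k := v)) = jobsto i m"
  unfolding jobsto_def by auto
lemma jobsto_Suc: "jobsto (Suc i) m \<longleftrightarrow> jobsto i m \<and> m (G i 0) = int (tt J i) \<and> m (G i 1) = int (aa J i) \<and> m (G i 2) = int (dd J i)"
  unfolding jobsto_def by (auto simp: less_Suc_eq)

lemma m0_t: "i < n \<Longrightarrow> m0 (1 + 3 * int i) = int (tt J i)"
  using init_field[of i J 0] by simp
lemma m0_a: "i < n \<Longrightarrow> m0 (2 + 3 * int i) = int (aa J i)"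
  using init_field[of i J 1] by (simp add: add.commute add.left_commute)
lemma m0_d: "i < n \<Longrightarrow> m0 (3 + 3 * int i) = int (dd J i)"
  using init_field[of i J 2] by (simp add: add.commute add.left_commute)

definition rdaddr :: "int \<Rightarrow> int" where "rdaddr p = (if p \<le> 20 then -1 - p else p)"

lemma copyrd_wp:
  assumes "inpok m" "m 4 = p" "0 \<le> p" "m 16 = 20" "r \<noteq> 15" "r \<noteq> 4" "r \<noteq> 16" "m 0 = 0"
  shows "wp (copyrd r) Q m k = Q (m(15 := rdaddr p, int r := m0 p)) (k + 4)"
proof (cases "p \<le> 20")
  case True
  have "m (-1 - p) = m0 p" using assms(1,3) True unfolding inpok_def by auto
  moreover have "-1 - p \<noteq> 15" using assms(3) by simp
  ultimately show ?thesis using assms True by (simp add: copyrd_def rdaddr_def eval_nat_numeral)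
next
  case False
  have "m p = m0 p" using assms(1) False unfolding inpok_def by auto
  moreover have "p \<noteq> 15" using False by simp
  ultimately show ?thesis using assms False by (simp add: copyrd_def rdaddr_def eval_nat_numeral)
qed

lemma jobsto_0[simp]: "jobsto 0 m" by (simp add: jobsto_def)

definition CIi :: "nat \<Rightarrow> nat \<Rightarrow> mem \<Rightarrow> nat \<Rightarrow> bool" where
  "CIi k0 i m k \<longleftrightarrow> i \<le> n \<and> regs m \<and> inpok m \<and> zero3 m \<and> jobsto i m \<and>
     m 3 = int i + 1 \<and> m 4 = 1 + 3 * int i \<and> m 5 = G i 0 \<and> k \<le> k0 + 3 + 26 * i"

lemma copy_body:
  assumes "CIi k0 i m k" "m 3 \<le> m 2"
  shows "wp copybody (\<lambda>m' k'. CIi k0 (Suc i) m' (k' + 2)) m k"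
proof -
  have ii: "i < n" using assms unfolding CIi_def regs_def by auto
  have r: "m 0 = 0" "m 1 = 1" "m 2 = int n" "m 3 = int i + 1" "m 4 = 1 + 3 * int i" "m 5 = G i 0"
    and ip: "inpok m" and z: "zero3 m" and jt: "jobsto i m" and kk: "k \<le> k0 + 3 + 26 * i"
    using assms unfolding CIi_def regs_def by auto
  have ti: "m0 (1 + 3 * int i) = int (tt J i)" "m0 (2 + 3 * int i) = int (aa J i)" "m0 (3 + 3 * int i) = int (dd J i)"
    using m0_t[OF ii] m0_a[OF ii] m0_d[OF ii] by auto
  show ?thesis
    unfolding copybody_def CIi_def
    using r ip z jt kk ti ii
    apply (simp add: jobsto_Suc regs_def copyrd_wp)
    done
qed

lemma copy_ok:
  "hoare (\<lambda>m k. regs m \<and> inpok m \<and> zero3 m \<and> k = k0) copy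
         (\<lambda>m k. regs m \<and> inpok m \<and> zero3 m \<and> jobsto n m \<and> k \<le> k0 + 5 + 26 * n)"
proof -
  have eq: "copy = seqs ([iC 3 1, iC 4 1, iC 5 (G 0 0)] @ [WhileLe 3 2 copybody])" by (simp add: copy_def)
  have W: "hoare (\<lambda>m k. \<exists>i. CIi k0 i m k) (seqs [WhileLe 3 2 copybody])
         (\<lambda>m k. regs m \<and> inpok m \<and> zero3 m \<and> jobsto n m \<and> k \<le> k0 + 5 + 26 * n)"
  proof (rule hoare_seqs_one, rule hoare_while[where f = "\<lambda>m. nat (m 2 - m 3 + 1)"])
    fix v
    show "hoare (\<lambda>m k. (\<exists>i. CIi k0 i m k) \<and> m (int 3) \<le> m (int 2) \<and> nat (m 2 - m 3 + 1) = v) copybody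
               (\<lambda>m k. (\<exists>i. CIi k0 i m (k + 2)) \<and> nat (m 2 - m 3 + 1) < v)"
    proof (rule hoare_wpI)
      fix m k assume "(\<exists>i. CIi k0 i m k) \<and> m (int 3) \<le> m (int 2) \<and> nat (m 2 - m 3 + 1) = v"
      then obtain i where h: "CIi k0 i m k" "m 3 \<le> m 2" "nat (m 2 - m 3 + 1) = v" by auto
      have "wp copybody (\<lambda>m' k'. CIi k0 (Suc i) m' (k' + 2)) m k" using copy_body[OF h(1,2)] .
      then show "wp copybody (\<lambda>m k. (\<exists>i. CIi k0 i m (k + 2)) \<and> nat (m 2 - m 3 + 1) < v) m k"
      proof (rule wp_mono)
        fix m' k' assume c: "CIi k0 (Suc i) m' (k' + 2)"
        have "m 2 = int n" "m 3 = int i + 1" "m' 2 = int n" "m' 3 = int i + 2" "i < n"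
          using h(1,2) c unfolding CIi_def regs_def by auto
        then show "(\<exists>i. CIi k0 i m' (k' + 2)) \<and> nat (m' 2 - m' 3 + 1) < v" using c h(3) by auto
      qed
    qed
  next
    fix m k assume "\<exists>i. CIi k0 i m k" "\<not> m (int 3) \<le> m (int 2)"
    then obtain i where c: "CIi k0 i m k" "\<not> m 3 \<le> m 2" by auto
    then have "i = n" unfolding CIi_def regs_def by auto
    then show "regs m \<and> inpok m \<and> zero3 m \<and> jobsto n m \<and> k + 2 \<le> k0 + 5 + 26 * n"
      using c unfolding CIi_def by auto
  qed
  show ?thesis unfolding eq
  proof (rule hoare_seqs_app[OF _ W])
    fix m k assume "regs m \<and> inpok m \<and> zero3 m \<and> k = k0"
    then show "wp (seqs [iC 3 1, iC 4 1, iC 5 (G 0 0)]) (\<lambda>m k. \<exists>i. CIi k0 i m k) m k"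
      by (simp add: CIi_def regs_def)
  qed
qed

definition KK :: nat where "KK = lbp_K J"

definition kmax :: "nat \<Rightarrow> nat" where "kmax i = Max (insert 0 (dd J ` {..<i}))"

lemma kmax_0: "kmax 0 = 0" by (simp add: kmax_def)
lemma kmax_Suc: "kmax (Suc i) = max (kmax i) (dd J i)"
proof -
  have "kmax (Suc i) = Max (insert (dd J i) (insert 0 (dd J ` {..<i})))"
    unfolding kmax_def lessThan_Suc image_insert by (simp only: insert_commute)
  also have "\<dots> = max (dd J i) (kmax i)" unfolding kmax_def by (rule Max_insert) auto
  finally show ?thesis by (simp add: max.commute)
qed
lemma kmax_n: "kmax n = KK"
proof -
  have "set (map (\<lambda>j. snd (snd j)) J) = dd J ` {..<n}"
  proof (intro set_eqI iffI)
    fix x assume "x \<in> set (map (\<lambda>j. snd (snd j)) J)"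
    then obtain i where "i < n" "x = snd (snd (J ! i))" by (auto simp: in_set_conv_nth)
    then show "x \<in> dd J ` {..<n}" by (auto simp: dd_def)
  next
    fix x assume "x \<in> dd J ` {..<n}"
    then obtain i where "i < n" "x = snd (snd (J ! i))" by (auto simp: dd_def)
    then show "x \<in> set (map (\<lambda>j. snd (snd j)) J)" by (auto intro: nth_mem)
  qed
  then show ?thesis unfolding kmax_def KK_def lbp_K_def by simp
qed
lemma dd_le_KK: "j < n \<Longrightarrow> dd J j \<le> KK"
  unfolding kmax_n[symmetric] kmax_def by (rule Max_ge) auto

definition KIi :: "nat \<Rightarrow> nat \<Rightarrow> mem \<Rightarrow> nat \<Rightarrow> bool" where
  "KIi k0 i m k \<longleftrightarrow> i \<le> n \<and> regs m \<and> zero3 m \<and> jobsto n m \<and>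
     m 3 = int i + 1 \<and> m 5 = G i 2 \<and> m 9 = int (kmax i) \<and> k \<le> k0 + 3 + 8 * i"

lemma k_body:
  assumes "KIi k0 i m k" "m 3 \<le> m 2"
  shows "wp kbody (\<lambda>m' k'. KIi k0 (Suc i) m' (k' + 2)) m k"
proof -
  have ii: "i < n" using assms unfolding KIi_def regs_def by auto
  have r: "m 0 = 0" "m 1 = 1" "m 2 = int n" "m 3 = int i + 1" "m 5 = G i 2" "m 9 = int (kmax i)"
    and z: "zero3 m" and jt: "jobsto n m" and kk: "k \<le> k0 + 3 + 8 * i"
    using assms unfolding KIi_def regs_def by auto
  have d: "m (G i 2) = int (dd J i)" using jt ii unfolding jobsto_def by auto
  show ?thesis
    unfolding kbody_def KIi_def
    using r z jt kk ii d
    by (simp add: regs_def kmax_Suc max_def)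
qed

lemma kloop_ok:
  "hoare (\<lambda>m k. regs m \<and> zero3 m \<and> jobsto n m \<and> k = k0) kloop
         (\<lambda>m k. regs m \<and> zero3 m \<and> jobsto n m \<and> m 9 = int KK \<and> k \<le> k0 + 5 + 8 * n)"
proof -
  have eq: "kloop = seqs ([iC 9 0, iC 3 1, iC 5 (G 0 2)] @ [WhileLe 3 2 kbody])" by (simp add: kloop_def)
  have W: "hoare (\<lambda>m k. \<exists>i. KIi k0 i m k) (seqs [WhileLe 3 2 kbody])
         (\<lambda>m k. regs m \<and> zero3 m \<and> jobsto n m \<and> m 9 = int KK \<and> k \<le> k0 + 5 + 8 * n)"
  proof (rule hoare_seqs_one, rule hoare_while[where f = "\<lambda>m. nat (m 2 - m 3 + 1)"])
    fix v
    show "hoare (\<lambda>m k. (\<exists>i. KIi k0 i m k) \<and> m (int 3) \<le> m (int 2) \<and> nat (m 2 - m 3 + 1) = v) kbody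
               (\<lambda>m k. (\<exists>i. KIi k0 i m (k + 2)) \<and> nat (m 2 - m 3 + 1) < v)"
    proof (rule hoare_wpI)
      fix m k assume "(\<exists>i. KIi k0 i m k) \<and> m (int 3) \<le> m (int 2) \<and> nat (m 2 - m 3 + 1) = v"
      then obtain i where h: "KIi k0 i m k" "m 3 \<le> m 2" "nat (m 2 - m 3 + 1) = v" by auto
      have "wp kbody (\<lambda>m' k'. KIi k0 (Suc i) m' (k' + 2)) m k" using k_body[OF h(1,2)] .
      then show "wp kbody (\<lambda>m k. (\<exists>i. KIi k0 i m (k + 2)) \<and> nat (m 2 - m 3 + 1) < v) m k"
      proof (rule wp_mono)
        fix m' k' assume c: "KIi k0 (Suc i) m' (k' + 2)"
        have "m 2 = int n" "m 3 = int i + 1" "m' 2 = int n" "m' 3 = int i + 2" "i < n"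
          using h(1,2) c unfolding KIi_def regs_def by auto
        then show "(\<exists>i. KIi k0 i m' (k' + 2)) \<and> nat (m' 2 - m' 3 + 1) < v" using c h(3) by auto
      qed
    qed
  next
    fix m k assume "\<exists>i. KIi k0 i m k" "\<not> m (int 3) \<le> m (int 2)"
    then obtain i where c: "KIi k0 i m k" "\<not> m 3 \<le> m 2" by auto
    then have "i = n" unfolding KIi_def regs_def by auto
    then show "regs m \<and> zero3 m \<and> jobsto n m \<and> m 9 = int KK \<and> k + 2 \<le> k0 + 5 + 8 * n"
      using c kmax_n unfolding KIi_def by auto
  qed
  show ?thesis unfolding eq
  proof (rule hoare_seqs_app[OF _ W])
    fix m k assume "regs m \<and> zero3 m \<and> jobsto n m \<and> k = k0"
    then show "wp (seqs [iC 9 0, iC 3 1, iC 5 (G 0 2)]) (\<lambda>m k. \<exists>i. KIi k0 i m k) m k"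
      by (simp add: KIi_def regs_def kmax_0)
  qed
qed

end



definition frame :: "int set \<Rightarrow> mem \<Rightarrow> mem \<Rightarrow> bool" where
  "frame A m m' \<longleftrightarrow> (\<forall>a. a \<notin> A \<longrightarrow> m' a = m a)"

definition ar :: "mem \<Rightarrow> nat \<Rightarrow> nat \<Rightarrow> int" where "ar m k = (\<lambda>x. m (G x k))"

lemma frame_reg: "frame A m m' \<Longrightarrow> a \<notin> A \<Longrightarrow> m' a = m a"
  unfolding frame_def by auto

lemma frame_arr: "frame A m m' \<Longrightarrow> (\<And>x. G x k \<notin> A) \<Longrightarrow> ar m' k = ar m k"
  unfolding frame_def ar_def by auto

lemma frame_G: "frame A m m' \<Longrightarrow> (\<And>x k. G x k \<notin> A) \<Longrightarrow> m' (G x k) = m (G x k)"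
  unfolding frame_def by auto

lemma frame_trans: "frame A m m1 \<Longrightarrow> frame B m1 m2 \<Longrightarrow> A \<subseteq> C \<Longrightarrow> B \<subseteq> C \<Longrightarrow> frame C m m2"
  unfolding frame_def
proof (intro allI impI)
  fix a assume h: "\<forall>a. a \<notin> A \<longrightarrow> m1 a = m a" "\<forall>a. a \<notin> B \<longrightarrow> m2 a = m1 a" "A \<subseteq> C" "B \<subseteq> C" "a \<notin> C"
  then have "a \<notin> A" "a \<notin> B" by auto
  then show "m2 a = m a" using h by simp
qed

lemma frame_refl[simp]: "frame A m m" unfolding frame_def by simp
lemma frame_upd_in[simp]: "a \<in> A \<Longrightarrow> frame A m (m'(a := v)) = frame A m m'"
  unfolding frame_def by auto
lemma frame_ext: "frame A m1 m' \<Longrightarrow> (\<And>a. a \<notin> B \<Longrightarrow> m1 a = m a) \<Longrightarrow> A \<subseteq> C \<Longrightarrow> B \<subseteq> C \<Longrightarrow> frame C m m'"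
  unfolding frame_def by (metis subsetD)

lemma frame_arr2: "frame A m m' \<Longrightarrow> A \<subseteq> {0..} \<Longrightarrow> ar m' k = ar m k"
  unfolding frame_def ar_def using G_neg by (metis atLeast_iff not_le subsetD)
lemma frame_G2: "frame A m m' \<Longrightarrow> A \<subseteq> {0..} \<Longrightarrow> m' (G x k) = m (G x k)"
  unfolding frame_def using G_neg by (metis atLeast_iff not_le subsetD)

lemma ar_upd_reg[simp]: "0 \<le> a \<Longrightarrow> ar (m(a := v)) k = ar m k"
  unfolding ar_def by (auto simp: G_ne_nonneg)
lemma ar_upd_G_other[simp]: "k < 8 \<Longrightarrow> l < 8 \<Longrightarrow> k \<noteq> l \<Longrightarrow> ar (m(G x l := v)) k = ar m k"
  unfolding ar_def by auto
lemma ar_upd_G_same[simp]: "k < 8 \<Longrightarrow> ar (m(G x k := v)) k = (ar m k)(x := v)"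
  unfolding ar_def by (auto simp: fun_eq_iff)
lemma ar_apply: "ar m k x = m (G x k)" by (simp add: ar_def)

lemma hoare_pointwise: "(\<And>m k. P m k \<Longrightarrow> hoare (\<lambda>m' k'. m' = m \<and> k' = k) c Q) \<Longrightarrow> hoare P c Q"
  unfolding hoare_def by blast

context run
begin

definition cand :: "nat \<Rightarrow> mem \<Rightarrow> nat \<Rightarrow> int" where
  "cand \<tau> m j = candf mk \<tau> (tt J j) (m (G (\<tau> + tt J j) 5))"

lemma exbranch_ok:
  assumes r: "m 0 = 0" "m 1 = 1" "m 6 = int t" "m 10 = int \<tau>" "m 3 = int j + 1" "m 11 = 0 \<or> m 11 = 1"
  and H: "\<And>m' k'. frame {11, 13, 14, 15, 16, 17, 18, 19} m m' \<Longrightarrow> m' 11 = 1 \<Longrightarrow>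
     m' 0 = m 0 \<Longrightarrow> m' 1 = m 1 \<Longrightarrow> m' 2 = m 2 \<Longrightarrow> m' 3 = m 3 \<Longrightarrow> m' 5 = m 5 \<Longrightarrow>
     m' 6 = m 6 \<Longrightarrow> m' 7 = m 7 \<Longrightarrow> m' 8 = m 8 \<Longrightarrow> m' 9 = m 9 \<Longrightarrow> m' 10 = m 10 \<Longrightarrow> m' 12 = m 12 \<Longrightarrow>
     (if m 11 = 1 \<and> m 13 \<le> candf mk \<tau> t (m (G (\<tau> + t) 5)) then m' 13 = m 13 \<and> m' 14 = m 14
      else m' 13 = candf mk \<tau> t (m (G (\<tau> + t) 5)) \<and> m' 14 = int j) \<Longrightarrow> k' \<le> k + 18 \<Longrightarrow> Q m' k'"
  shows "wp (exbranch mk) Q m k"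
  using r unfolding exbranch_def candcode_def
  by (cases mk; auto intro!: H simp: frame_def candf_def max_def)




lemma inner_ok:
  assumes r: "m 0 = 0" "m 1 = 1" "m 3 = int j + 1" "m 5 = G j 0" "m 10 = int \<tau>"
     "m (G j 0) = int (tt J j)" "m (G j 1) = int (aa J j)" "m (G j 2) = int (dd J j)"
     "m 11 = 0 \<or> m 11 = 1"
  and H: "\<And>m' k'. frame {3, 5, 6, 7, 8, 11, 12, 13, 14, 15, 16, 17, 18, 19} m m' \<Longrightarrow>
     m' 3 = int j + 2 \<Longrightarrow> m' 5 = G (Suc j) 0 \<Longrightarrow>
     m' 12 = (if \<tau> < aa J j \<and> aa J j + tt J j \<le> dd J j then 1 else m 12) \<Longrightarrow>
     (if aa J j \<le> \<tau> \<and> \<tau> + tt J j \<le> dd J j then m' 11 = 1 \<and>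
         (if m 11 = 1 \<and> m 13 \<le> cand \<tau> m j then m' 13 = m 13 \<and> m' 14 = m 14
          else m' 13 = cand \<tau> m j \<and> m' 14 = int j)
      else m' 11 = m 11 \<and> m' 13 = m 13 \<and> m' 14 = m 14) \<Longrightarrow> k' \<le> k + 30 \<Longrightarrow> Q m' k'"
  shows "wp (inner mk) Q m k"
proof (cases "aa J j \<le> \<tau> \<and> \<tau> + tt J j \<le> dd J j")
  case True
  define m1 where "m1 = m(6 := int (tt J j), 7 := int (aa J j), 8 := int (dd J j), 15 := int \<tau> + int (tt J j))"
  have "wp (exbranch mk) (\<lambda>m' k'. Q (m'(16 := 8, 5 := m' 5 - 8, 3 := m' 3 + m' 1)) (k' + 5)) m1 (k + 6)"
  proof (rule exbranch_ok)
    show "m1 0 = 0" "m1 1 = 1" "m1 6 = int (tt J j)" "m1 10 = int \<tau>" "m1 3 = int j + 1" "m1 11 = 0 \<or> m1 11 = 1"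
      using r by (auto simp: m1_def)
    fix m' k'
    assume f: "frame {11, 13, 14, 15, 16, 17, 18, 19} m1 m'" "m' 11 = 1"
      "m' 0 = m1 0" "m' 1 = m1 1" "m' 2 = m1 2" "m' 3 = m1 3" "m' 5 = m1 5" "m' 6 = m1 6" "m' 7 = m1 7"
      "m' 8 = m1 8" "m' 9 = m1 9" "m' 10 = m1 10" "m' 12 = m1 12"
      and c: "(if m1 11 = 1 \<and> m1 13 \<le> candf mk \<tau> (tt J j) (m1 (G (\<tau> + tt J j) 5)) then m' 13 = m1 13 \<and> m' 14 = m1 14
           else m' 13 = candf mk \<tau> (tt J j) (m1 (G (\<tau> + tt J j) 5)) \<and> m' 14 = int j)"
      and kk: "k' \<le> k + 6 + 18"
    have m'1: "m' 1 = 1" using f r by (simp add: m1_def)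
    show "Q (m'(16 := 8, 5 := m' 5 - 8, 3 := m' 3 + m' 1)) (k' + 5)"
      unfolding m'1
    proof (rule H)
      have "frame {3, 5, 6, 7, 8, 11, 12, 13, 14, 15, 16, 17, 18, 19} m m'"
        by (rule frame_ext[OF f(1), of "{6, 15, 7, 8}"]) (auto simp: m1_def)
      then show "frame {3, 5, 6, 7, 8, 11, 12, 13, 14, 15, 16, 17, 18, 19} m (m'(16 := 8, 5 := m' 5 - 8, 3 := m' 3 + 1))"
        by simp
      have m1G: "m1 (G (\<tau> + tt J j) 5) = m (G (\<tau> + tt J j) 5)" "m1 11 = m 11" "m1 13 = m 13" "m1 14 = m 14"
        by (auto simp: m1_def)
      show "(if aa J j \<le> \<tau> \<and> \<tau> + tt J j \<le> dd J j then (m'(16 := 8, 5 := m' 5 - 8, 3 := m' 3 + 1)) 11 = 1 \<and>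
         (if m 11 = 1 \<and> m 13 \<le> cand \<tau> m j then (m'(16 := 8, 5 := m' 5 - 8, 3 := m' 3 + 1)) 13 = m 13 \<and> (m'(16 := 8, 5 := m' 5 - 8, 3 := m' 3 + 1)) 14 = m 14
          else (m'(16 := 8, 5 := m' 5 - 8, 3 := m' 3 + 1)) 13 = cand \<tau> m j \<and> (m'(16 := 8, 5 := m' 5 - 8, 3 := m' 3 + 1)) 14 = int j)
      else (m'(16 := 8, 5 := m' 5 - 8, 3 := m' 3 + 1)) 11 = m 11 \<and> (m'(16 := 8, 5 := m' 5 - 8, 3 := m' 3 + 1)) 13 = m 13 \<and> (m'(16 := 8, 5 := m' 5 - 8, 3 := m' 3 + 1)) 14 = m 14)"
        using True f(2) c m1G by (simp add: cand_def)
    qed (use f r kk True in \<open>auto simp: m1_def\<close>)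
  qed
  then show ?thesis using r True unfolding inner_def by (simp add: m1_def eval_nat_numeral)
next
  case False
  then show ?thesis using r unfolding inner_def
    by (auto intro!: H simp: not_le)
qed


definition II :: "nat \<Rightarrow> (nat \<Rightarrow> int) \<Rightarrow> (nat \<Rightarrow> int) \<Rightarrow> nat \<Rightarrow> nat \<Rightarrow> mem \<Rightarrow> nat \<Rightarrow> bool" where
  "II \<tau> Vs Cs c0 j m k \<longleftrightarrow> j \<le> n \<and> regs m \<and> jobsto n m \<and> zero3 m \<and> ar m 5 = Vs \<and> ar m 6 = Cs \<and>
     m 9 = int KK \<and> m 10 = int \<tau> \<and> m 3 = int j + 1 \<and> m 5 = G j 0 \<and>
     m 12 = (if \<exists>j'<j. \<tau> < aa J j' \<and> aa J j' + tt J j' \<le> dd J j' then 1 else 0) \<and>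
     (if \<exists>j'<j. exj J \<tau> j' then m 11 = 1 \<and> 0 \<le> m 14 \<and> exj J \<tau> (nat (m 14)) \<and>
         m 13 = candf mk \<tau> (tt J (nat (m 14))) (Vs (\<tau> + tt J (nat (m 14)))) \<and>
         (\<forall>j'<j. exj J \<tau> j' \<longrightarrow> m 13 \<le> candf mk \<tau> (tt J j') (Vs (\<tau> + tt J j')))
      else m 11 = 0) \<and>
     k \<le> c0 + 32 * j"

lemma jobsto_frame: assumes "frame A m m'" "A \<subseteq> {0..}" shows "jobsto i m' = jobsto i m"
  unfolding jobsto_def using frame_G2[OF assms] by simp
lemma zero3_frame: assumes "frame A m m'" "A \<subseteq> {0..}" shows "zero3 m' = zero3 m"
  unfolding zero3_def using frame_G2[OF assms] by simp

lemma ex_less_Suc: "(\<exists>j'<Suc j. P j') \<longleftrightarrow> (\<exists>j'<j. P j') \<or> P j"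
  by (auto simp: less_Suc_eq)
lemma all_less_Suc: "(\<forall>j'<Suc j. P j') \<longleftrightarrow> (\<forall>j'<j. P j') \<and> P j"
  by (auto simp: less_Suc_eq)

lemma inner_step:
  assumes ii: "II \<tau> Vs Cs c0 j m k" and c: "m 3 \<le> m 2"
  shows "wp (inner mk) (\<lambda>m' k'. II \<tau> Vs Cs c0 (Suc j) m' (k' + 2)) m k"
proof -
  have jn: "j < n" using ii c unfolding II_def regs_def by auto
  have jt: "jobsto n m" using ii unfolding II_def by simp
  have gj: "m (G j 0) = int (tt J j)" "m (G j 1) = int (aa J j)" "m (G j 2) = int (dd J j)"
    using jt jn unfolding jobsto_def by auto
  have m11: "m 11 = 0 \<or> m 11 = 1" using ii unfolding II_def by (auto split: if_splits)
  have r: "m 0 = 0" "m 1 = 1" "m 3 = int j + 1" "m 5 = G j 0" "m 10 = int \<tau>"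
    using ii unfolding II_def regs_def by auto
  show ?thesis
  proof (rule inner_ok[OF r gj m11])
    fix m' k'
    let ?W = "{3, 5, 6, 7, 8, 11, 12, 13, 14, 15, 16, 17, 18, 19} :: int set"
    assume fr: "frame ?W m m'" and h3: "m' 3 = int j + 2" and h5: "m' 5 = G (Suc j) 0"
      and h12: "m' 12 = (if \<tau> < aa J j \<and> aa J j + tt J j \<le> dd J j then 1 else m 12)"
      and hf: "(if aa J j \<le> \<tau> \<and> \<tau> + tt J j \<le> dd J j then m' 11 = 1 \<and>
         (if m 11 = 1 \<and> m 13 \<le> cand \<tau> m j then m' 13 = m 13 \<and> m' 14 = m 14
          else m' 13 = cand \<tau> m j \<and> m' 14 = int j)
      else m' 11 = m 11 \<and> m' 13 = m 13 \<and> m' 14 = m 14)"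
      and hk: "k' \<le> k + 30"
    have sub: "?W \<subseteq> {0..}" by auto
    have same: "m' 0 = m 0" "m' 1 = m 1" "m' 2 = m 2" "m' 9 = m 9" "m' 10 = m 10"
      using fr unfolding frame_def by auto
    have arrs: "ar m' 5 = ar m 5" "ar m' 6 = ar m 6" using frame_arr2[OF fr sub] by auto
    have jz: "jobsto n m' = jobsto n m" "zero3 m' = zero3 m"
      using jobsto_frame[OF fr sub] zero3_frame[OF fr sub] by auto
    have Vs: "Vs = ar m 5" using ii unfolding II_def by simp
    have candeq: "cand \<tau> m j = candf mk \<tau> (tt J j) (Vs (\<tau> + tt J j))"
      unfolding cand_def Vs ar_def by simp
    have exj_j: "exj J \<tau> j \<longleftrightarrow> aa J j \<le> \<tau> \<and> \<tau> + tt J j \<le> dd J j" using jn by (simp add: exj_def)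
    note iiC = ii[unfolded II_def]
    have old1: "m 12 = (if \<exists>j'<j. \<tau> < aa J j' \<and> aa J j' + tt J j' \<le> dd J j' then 1 else 0)"
      using iiC by (elim conjE) assumption
    have old2: "(if \<exists>j'<j. exj J \<tau> j' then m 11 = 1 \<and> 0 \<le> m 14 \<and> exj J \<tau> (nat (m 14)) \<and>
         m 13 = candf mk \<tau> (tt J (nat (m 14))) (Vs (\<tau> + tt J (nat (m 14)))) \<and>
         (\<forall>j'<j. exj J \<tau> j' \<longrightarrow> m 13 \<le> candf mk \<tau> (tt J j') (Vs (\<tau> + tt J j')))
      else m 11 = 0)"
      using iiC by (elim conjE) assumption
    have old3: "k \<le> c0 + 32 * j" using iiC by (elim conjE) assumption
    note old = old1 old2 old3
    have P12: "m' 12 = (if \<exists>j'<Suc j. \<tau> < aa J j' \<and> aa J j' + tt J j' \<le> dd J j' then 1 else 0)"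
      using h12 old(1) by (auto simp: ex_less_Suc)
    have PF: "(if \<exists>j'<Suc j. exj J \<tau> j' then m' 11 = 1 \<and> 0 \<le> m' 14 \<and> exj J \<tau> (nat (m' 14)) \<and>
         m' 13 = candf mk \<tau> (tt J (nat (m' 14))) (Vs (\<tau> + tt J (nat (m' 14)))) \<and>
         (\<forall>j'<Suc j. exj J \<tau> j' \<longrightarrow> m' 13 \<le> candf mk \<tau> (tt J j') (Vs (\<tau> + tt J j')))
      else m' 11 = 0)"
    proof (cases "exj J \<tau> j")
      case True
      then have h: "m' 11 = 1" "(if m 11 = 1 \<and> m 13 \<le> cand \<tau> m j then m' 13 = m 13 \<and> m' 14 = m 14
          else m' 13 = cand \<tau> m j \<and> m' 14 = int j)" using hf exj_j by auto
      show ?thesis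
      proof (cases "\<exists>j'<j. exj J \<tau> j'")
        case True2: True
        then have o: "m 11 = 1" "0 \<le> m 14" "exj J \<tau> (nat (m 14))"
          "m 13 = candf mk \<tau> (tt J (nat (m 14))) (Vs (\<tau> + tt J (nat (m 14))))"
          "\<forall>j'<j. exj J \<tau> j' \<longrightarrow> m 13 \<le> candf mk \<tau> (tt J j') (Vs (\<tau> + tt J j'))"
          using old(2) by auto
        show ?thesis
        proof (cases "m 13 \<le> cand \<tau> m j")
          case True
          then show ?thesis using h o \<open>exj J \<tau> j\<close> candeq by (auto simp: all_less_Suc)
        next
          case False
          then show ?thesis using h o \<open>exj J \<tau> j\<close> candeq by (auto simp: all_less_Suc)
        qed
      next
        case False2: False
        then have "m 11 = 0" using old(2) by auto
        then show ?thesis using h \<open>exj J \<tau> j\<close> candeq False2 by (auto simp: all_less_Suc)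
      qed
    next
      case False
      then have h: "m' 11 = m 11" "m' 13 = m 13" "m' 14 = m 14" using hf exj_j by auto
      show ?thesis
      proof (cases "\<exists>j'<j. exj J \<tau> j'")
        case True2: True
        then have o: "m 11 = 1" "0 \<le> m 14" "exj J \<tau> (nat (m 14))"
          "m 13 = candf mk \<tau> (tt J (nat (m 14))) (Vs (\<tau> + tt J (nat (m 14))))"
          "\<forall>j'<j. exj J \<tau> j' \<longrightarrow> m 13 \<le> candf mk \<tau> (tt J j') (Vs (\<tau> + tt J j'))"
          using old(2) by auto
        have "\<exists>j'<Suc j. exj J \<tau> j'" using True2 less_SucI by blast
        moreover have "\<forall>j'<Suc j. exj J \<tau> j' \<longrightarrow> m' 13 \<le> candf mk \<tau> (tt J j') (Vs (\<tau> + tt J j'))"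
          using o(5) h(2) False by (auto simp: less_Suc_eq)
        ultimately show ?thesis using h o by simp
      next
        case False2: False
        then show ?thesis using old(2) h False by (auto simp: less_Suc_eq)
      qed
    qed
    show "II \<tau> Vs Cs c0 (Suc j) m' (k' + 2)"
      unfolding II_def using jn ii same arrs jz h3 h5 P12 PF hk old(3)
      unfolding II_def regs_def by auto
  qed
qed


lemma inner_loop:
  "hoare (\<lambda>m k. II \<tau> Vs Cs c0 0 m k) (WhileLe 3 2 (inner mk)) (\<lambda>m k. \<exists>k1. II \<tau> Vs Cs c0 n m k1 \<and> k = k1 + 2)"
proof -
  have "hoare (\<lambda>m k. \<exists>j. II \<tau> Vs Cs c0 j m k) (WhileLe 3 2 (inner mk)) (\<lambda>m k. \<exists>k1. II \<tau> Vs Cs c0 n m k1 \<and> k = k1 + 2)"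
  proof (rule hoare_while[where f = "\<lambda>m. nat (m 2 - m 3 + 1)"])
    fix v
    show "hoare (\<lambda>m k. (\<exists>j. II \<tau> Vs Cs c0 j m k) \<and> m (int 3) \<le> m (int 2) \<and> nat (m 2 - m 3 + 1) = v) (inner mk)
               (\<lambda>m k. (\<exists>j. II \<tau> Vs Cs c0 j m (k + 2)) \<and> nat (m 2 - m 3 + 1) < v)"
    proof (rule hoare_wpI)
      fix m k assume "(\<exists>j. II \<tau> Vs Cs c0 j m k) \<and> m (int 3) \<le> m (int 2) \<and> nat (m 2 - m 3 + 1) = v"
      then obtain j where h: "II \<tau> Vs Cs c0 j m k" "m 3 \<le> m 2" "nat (m 2 - m 3 + 1) = v" by auto
      have "wp (inner mk) (\<lambda>m' k'. II \<tau> Vs Cs c0 (Suc j) m' (k' + 2)) m k" using inner_step[OF h(1,2)] .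
      then show "wp (inner mk) (\<lambda>m k. (\<exists>j. II \<tau> Vs Cs c0 j m (k + 2)) \<and> nat (m 2 - m 3 + 1) < v) m k"
      proof (rule wp_mono)
        fix m' k' assume c: "II \<tau> Vs Cs c0 (Suc j) m' (k' + 2)"
        have "m 2 = int n" "m 3 = int j + 1" "m' 2 = int n" "m' 3 = int j + 2" "j < n"
          using h(1,2) c unfolding II_def regs_def by auto
        then show "(\<exists>j. II \<tau> Vs Cs c0 j m' (k' + 2)) \<and> nat (m' 2 - m' 3 + 1) < v" using c h(3) by auto
      qed
    qed
  next
    fix m k assume "\<exists>j. II \<tau> Vs Cs c0 j m k" "\<not> m (int 3) \<le> m (int 2)"
    then obtain j where c: "II \<tau> Vs Cs c0 j m k" "\<not> m 3 \<le> m 2" by auto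
    then have "j = n" unfolding II_def regs_def by auto
    then show "\<exists>k1. II \<tau> Vs Cs c0 n m k1 \<and> k + 2 = k1 + 2" using c by auto
  qed
  then show ?thesis by (rule hoare_conseq) auto
qed

definition newV :: "mem \<Rightarrow> nat \<Rightarrow> int" where
  "newV m \<tau> = (if m 11 = 1 then m 13 else if m 12 = 1 then m (G (Suc \<tau>) 5) else 0)"
definition newC :: "mem \<Rightarrow> int" where
  "newC m = (if m 11 = 1 then m 14 + 1 else if m 12 = 1 then 0 else -1)"

lemma after_ok:
  assumes r: "m 0 = 0" "m 1 = 1" "m 10 = int \<tau>" "m 11 = 0 \<or> m 11 = 1" "m 12 = 0 \<or> m 12 = 1"
  and H: "\<And>m' k'. frame {15, 16, 17, 18, 19, G \<tau> 5, G \<tau> 6} m m' \<Longrightarrow> m' (G \<tau> 5) = newV m \<tau> \<Longrightarrow>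
          m' (G \<tau> 6) = newC m \<Longrightarrow> k' \<le> k + 14 \<Longrightarrow> Q m' k'"
  shows "wp after Q m k"
  using r unfolding after_def
  by (auto intro!: H simp: newV_def newC_def frame_def)

lemma exj_pos: "exj J \<tau> j \<Longrightarrow> tt J j \<ge> 1"
  using restr[of j] by (auto simp: exj_def)

lemma goodAt_upd:
  assumes "\<tau> < x"
  shows "goodAt J mk (V(\<tau> := a)) (C(\<tau> := b)) x = goodAt J mk V C x"
  using assms unfolding goodAt_def by auto

definition DI :: "nat \<Rightarrow> nat \<Rightarrow> mem \<Rightarrow> nat \<Rightarrow> bool" where
  "DI c0 \<tau>1 m k \<longleftrightarrow> \<tau>1 \<le> KK + 1 \<and> regs m \<and> jobsto n m \<and> zero3 m \<and> m 9 = int KK \<and> m 10 = int \<tau>1 - 1 \<and>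
     (\<forall>x. \<tau>1 \<le> x \<and> x \<le> KK \<longrightarrow> goodAt J mk (ar m 5) (ar m 6) x) \<and>
     k \<le> c0 + (KK + 1 - \<tau>1) * (32 * n + 40)"


lemma dp_body:
  assumes di: "DI c0 (Suc \<tau>) M K0"
  shows "hoare (\<lambda>m k. m = M \<and> k = K0) (dpbody mk) (\<lambda>m k. DI c0 \<tau> m (k + 2))"
proof -
  let ?Vs = "ar M 5" and ?Cs = "ar M 6"
  have d: "Suc \<tau> \<le> KK + 1" "regs M" "jobsto n M" "zero3 M" "M 9 = int KK" "M 10 = int \<tau>"
    "\<forall>x. Suc \<tau> \<le> x \<and> x \<le> KK \<longrightarrow> goodAt J mk ?Vs ?Cs x"
    "K0 \<le> c0 + (KK + 1 - Suc \<tau>) * (32 * n + 40)"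
    using di unfolding DI_def by auto
  have eq: "dpbody mk = seqs ([iC 11 0, iC 12 0, iC 3 1, iC 5 (G 0 0)] @ WhileLe 3 2 (inner mk) # [after, iS 10 10 1])"
    by (simp add: dpbody_def)
  have tail: "wp (seqs [after, iS 10 10 1]) (\<lambda>m k. DI c0 \<tau> m (k + 2)) m k"
    if h: "\<exists>k1. II \<tau> ?Vs ?Cs (K0 + 4) n m k1 \<and> k = k1 + 2" for m k
  proof -
    obtain k1 where ii: "II \<tau> ?Vs ?Cs (K0 + 4) n m k1" and kk: "k = k1 + 2" using h by blast
    note iiC = ii[unfolded II_def]
    have r: "m 0 = 0" "m 1 = 1" "m 2 = int n" "m 10 = int \<tau>" "m 9 = int KK" "ar m 5 = ?Vs" "ar m 6 = ?Cs"
      "jobsto n m" "zero3 m"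
      using iiC unfolding regs_def by auto
    have m12: "m 12 = (if \<exists>j'<n. \<tau> < aa J j' \<and> aa J j' + tt J j' \<le> dd J j' then 1 else 0)"
      using iiC by (elim conjE) assumption
    have fnd: "(if \<exists>j'<n. exj J \<tau> j' then m 11 = 1 \<and> 0 \<le> m 14 \<and> exj J \<tau> (nat (m 14)) \<and>
         m 13 = candf mk \<tau> (tt J (nat (m 14))) (?Vs (\<tau> + tt J (nat (m 14)))) \<and>
         (\<forall>j'<n. exj J \<tau> j' \<longrightarrow> m 13 \<le> candf mk \<tau> (tt J j') (?Vs (\<tau> + tt J j')))
      else m 11 = 0)"
      using iiC by (elim conjE) assumption
    have k1: "k1 \<le> K0 + 4 + 32 * n" using iiC by (elim conjE) assumption
    have m11: "m 11 = 0 \<or> m 11 = 1" using fnd by (auto split: if_splits)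
    have m12': "m 12 = 0 \<or> m 12 = 1" using m12 by auto
    show ?thesis
      unfolding wp_seqs_Cons
    proof (rule after_ok[OF r(1,2,4) m11 m12'])
      fix m' k'
      assume fr: "frame {15, 16, 17, 18, 19, G \<tau> 5, G \<tau> 6} m m'" and nv: "m' (G \<tau> 5) = newV m \<tau>"
        and nc: "m' (G \<tau> 6) = newC m" and kk': "k' \<le> k + 14"
      have same: "m' 0 = 0" "m' 1 = 1" "m' 2 = int n" "m' 9 = int KK" "m' 10 = int \<tau>"
        using fr r unfolding frame_def by auto
      have ar5: "ar m' 5 = ?Vs(\<tau> := newV m \<tau>)" and ar6: "ar m' 6 = ?Cs(\<tau> := newC m)"
        using fr nv nc r(6,7) unfolding frame_def ar_def by (auto simp: fun_eq_iff)
      have jz: "jobsto n m'" "zero3 m'"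
        using fr r(8,9) unfolding frame_def jobsto_def zero3_def by auto
      have tK: "\<tau> \<le> KK" using d(1) by simp
      have goodT: "goodAt J mk (?Vs(\<tau> := newV m \<tau>)) (?Cs(\<tau> := newC m)) \<tau>"
      proof (cases "\<exists>j'<n. exj J \<tau> j'")
        case True
        then have o: "m 11 = 1" "0 \<le> m 14" "exj J \<tau> (nat (m 14))"
          "m 13 = candf mk \<tau> (tt J (nat (m 14))) (?Vs (\<tau> + tt J (nat (m 14))))"
          "\<forall>j'<n. exj J \<tau> j' \<longrightarrow> m 13 \<le> candf mk \<tau> (tt J j') (?Vs (\<tau> + tt J j'))"
          using fnd by auto
        have nn: "nat (m 14 + 1) - 1 = nat (m 14)" using o(2) by simp
        have pos: "tt J (nat (m 14)) \<ge> 1" using exj_pos[OF o(3)] .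
        have all: "\<forall>j. exj J \<tau> j \<longrightarrow> m 13 \<le> candf mk \<tau> (tt J j) ((?Vs(\<tau> := m 13)) (\<tau> + tt J j))"
        proof (intro allI impI)
          fix j assume ej: "exj J \<tau> j"
          have "tt J j \<ge> 1" using exj_pos[OF ej] .
          then have "(?Vs(\<tau> := m 13)) (\<tau> + tt J j) = ?Vs (\<tau> + tt J j)" by simp
          moreover have "j < n" using ej by (simp add: exj_def)
          ultimately show "m 13 \<le> candf mk \<tau> (tt J j) ((?Vs(\<tau> := m 13)) (\<tau> + tt J j))"
            using o(5) ej by simp
        qed
        show ?thesis unfolding goodAt_def
          using o nn pos all by (simp add: newV_def newC_def)
      next
        case False
        then have m11z: "m 11 = 0" using fnd by auto
        have nex: "\<forall>j. \<not> exj J \<tau> j" using False by (auto simp: exj_def)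
        show ?thesis
        proof (cases "futj J \<tau>")
          case True
          then have "m 12 = 1" using m12 unfolding futj_def by auto
          moreover have "m (G (Suc \<tau>) 5) = M (G (Suc \<tau>) 5)" using fun_cong[OF r(6), of "Suc \<tau>"] by (simp add: ar_def)
          ultimately show ?thesis unfolding goodAt_def using nex True m11z
            by (simp add: newV_def newC_def ar_def)
        next
          case False
          then have "m 12 = 0" using m12 unfolding futj_def by auto
          then show ?thesis unfolding goodAt_def using nex False m11z
            by (simp add: newV_def newC_def)
        qed
      qed
      have goodAll: "\<forall>x. \<tau> \<le> x \<and> x \<le> KK \<longrightarrow> goodAt J mk (ar m' 5) (ar m' 6) x"
      proof (intro allI impI)
        fix x assume x: "\<tau> \<le> x \<and> x \<le> KK"
        show "goodAt J mk (ar m' 5) (ar m' 6) x"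
        proof (cases "x = \<tau>")
          case True then show ?thesis using goodT ar5 ar6 by simp
        next
          case False
          then have "\<tau> < x" using x by simp
          then show ?thesis unfolding ar5 ar6 goodAt_upd[OF \<open>\<tau> < x\<close>] using d(7) x by auto
        qed
      qed
      have cost: "k' + 1 + 2 \<le> c0 + (KK + 1 - \<tau>) * (32 * n + 40)"
      proof -
        have "k' + 1 + 2 \<le> K0 + 4 + 32 * n + 2 + 14 + 3" using kk' kk k1 by simp
        also have "\<dots> \<le> c0 + (KK + 1 - Suc \<tau>) * (32 * n + 40) + (32 * n + 40)" using d(8) by simp
        also have "\<dots> = c0 + (KK + 1 - \<tau>) * (32 * n + 40)"
        proof -
          have e: "KK + 1 - \<tau> = Suc (KK + 1 - Suc \<tau>)" using d(1) by simp
          show ?thesis unfolding e mult_Suc by linarith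
        qed
        finally show ?thesis .
      qed
      show "wp (iS 10 10 1) (wp (seqs []) (\<lambda>m k. DI c0 \<tau> m (k + 2))) m' k'"
        using same jz goodAll cost tK unfolding DI_def regs_def by simp
    qed
  qed
  show ?thesis unfolding eq
  proof (rule hoare_seqs_app)
    fix m k assume "m = M \<and> k = K0"
    then show "wp (seqs [iC 11 0, iC 12 0, iC 3 1, iC 5 (G 0 0)]) (\<lambda>m k. II \<tau> ?Vs ?Cs (K0 + 4) 0 m k) m k"
      using d unfolding II_def regs_def by (simp add: exj_def)
  next
    show "hoare (\<lambda>m k. II \<tau> ?Vs ?Cs (K0 + 4) 0 m k) (seqs (WhileLe 3 2 (inner mk) # [after, iS 10 10 1]))
            (\<lambda>m k. DI c0 \<tau> m (k + 2))"
      by (rule hoare_seqs_cons[OF inner_loop]) (rule hoare_wpI, rule tail)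
  qed
qed


definition DPpost :: "nat \<Rightarrow> mem \<Rightarrow> nat \<Rightarrow> bool" where
  "DPpost c0 m k \<longleftrightarrow> regs m \<and> jobsto n m \<and> zero3 m \<and> (\<forall>x\<le>KK. goodAt J mk (ar m 5) (ar m 6) x) \<and>
     k \<le> c0 + 3 + (KK + 1) * (32 * n + 40)"

lemma dp_ok:
  "hoare (\<lambda>m k. regs m \<and> jobsto n m \<and> zero3 m \<and> m 9 = int KK \<and> k = c0) (dp mk) (DPpost c0)"
proof -
  have eq: "dp mk = seqs ([iA 10 9 0] @ [WhileLe 0 10 (dpbody mk)])" by (simp add: dp_def)
  have W: "hoare (\<lambda>m k. \<exists>\<tau>1. DI (c0 + 1) \<tau>1 m k) (WhileLe 0 10 (dpbody mk)) (DPpost c0)"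
  proof (rule hoare_while[where f = "\<lambda>m. nat (m 10 + 1)"])
    fix v
    show "hoare (\<lambda>m k. (\<exists>\<tau>1. DI (c0 + 1) \<tau>1 m k) \<and> m (int 0) \<le> m (int 10) \<and> nat (m 10 + 1) = v) (dpbody mk)
               (\<lambda>m k. (\<exists>\<tau>1. DI (c0 + 1) \<tau>1 m (k + 2)) \<and> nat (m 10 + 1) < v)"
    proof (rule hoare_pointwise)
      fix M K0 assume "(\<exists>\<tau>1. DI (c0 + 1) \<tau>1 M K0) \<and> M (int 0) \<le> M (int 10) \<and> nat (M 10 + 1) = v"
      then obtain \<tau>1 where h: "DI (c0 + 1) \<tau>1 M K0" "M 0 \<le> M 10" "nat (M 10 + 1) = v" by auto
      have "M 0 = 0" "M 10 = int \<tau>1 - 1" using h(1) unfolding DI_def regs_def by auto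
      then obtain \<tau> where t: "\<tau>1 = Suc \<tau>" using h(2) by (cases \<tau>1) auto
      have v: "v = Suc \<tau>" using h(3) \<open>M 10 = int \<tau>1 - 1\<close> t by simp
      show "hoare (\<lambda>m' k'. m' = M \<and> k' = K0) (dpbody mk) (\<lambda>m k. (\<exists>\<tau>1. DI (c0 + 1) \<tau>1 m (k + 2)) \<and> nat (m 10 + 1) < v)"
      proof (rule hoare_conseq[OF dp_body])
        show "DI (c0 + 1) (Suc \<tau>) M K0" using h(1) t by simp
      next
        fix m k assume "DI (c0 + 1) \<tau> m (k + 2)"
        moreover then have "m 10 = int \<tau> - 1" unfolding DI_def by simp
        ultimately show "(\<exists>\<tau>1. DI (c0 + 1) \<tau>1 m (k + 2)) \<and> nat (m 10 + 1) < v" using v by auto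
      qed simp
    qed
  next
    fix m k assume "\<exists>\<tau>1. DI (c0 + 1) \<tau>1 m k" "\<not> m (int 0) \<le> m (int 10)"
    then obtain \<tau>1 where c: "DI (c0 + 1) \<tau>1 m k" "\<not> m 0 \<le> m 10" by auto
    then have "\<tau>1 = 0" unfolding DI_def regs_def by auto
    then show "DPpost c0 m (k + 2)" using c unfolding DI_def DPpost_def by auto
  qed
  show ?thesis unfolding eq
  proof (rule hoare_seqs_app)
    fix m k assume "regs m \<and> jobsto n m \<and> zero3 m \<and> m 9 = int KK \<and> k = c0"
    then show "wp (seqs [iA 10 9 0]) (\<lambda>m k. \<exists>\<tau>1. DI (c0 + 1) \<tau>1 m k) m k"
      unfolding DI_def regs_def by (auto intro!: exI[of _ "KK + 1"])
  next
    show "hoare (\<lambda>m k. \<exists>\<tau>1. DI (c0 + 1) \<tau>1 m k) (seqs [WhileLe 0 10 (dpbody mk)]) (DPpost c0)"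
      by (rule hoare_seqs_one[OF W])
  qed
qed

end


context run
begin

lemma G_c6'[simp]: "- 38 - (8 * int a + 8 * int b) = G (a + b) 6" "- 38 - 8 * (int a + int b) = G (a + b) 6"
  by (simp_all add: G_def)
lemma G_c6s[simp]: "- 46 - 8 * int x = G (Suc x) 6" by (simp add: G_def)

definition hasj :: "(nat \<Rightarrow> int) \<Rightarrow> nat \<Rightarrow> nat \<Rightarrow> bool" where
  "hasj Ca q j \<longleftrightarrow> (\<exists>q'<q. Ca (setting.pth J Ca q') = int j + 1)"

definition execok :: "(nat \<Rightarrow> int) \<Rightarrow> nat \<Rightarrow> mem \<Rightarrow> bool" where
  "execok Ca q m \<longleftrightarrow> (\<forall>j. m (G j 3) = (if hasj Ca q j then 1 else 0))"

definition startok :: "(nat \<Rightarrow> int) \<Rightarrow> nat \<Rightarrow> mem \<Rightarrow> bool" where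
  "startok Ca q m \<longleftrightarrow> (\<forall>j q'. q' < q \<longrightarrow> Ca (setting.pth J Ca q') = int j + 1 \<longrightarrow> m (G j 4) = int (setting.pth J Ca q'))"

lemma execok_upd_reg[simp]: "0 \<le> a \<Longrightarrow> execok Ca q (m(a := v)) = execok Ca q m"
  unfolding execok_def by (auto simp: G_ne_nonneg)
lemma execok_upd_G[simp]: "k < 8 \<Longrightarrow> k \<noteq> 3 \<Longrightarrow> execok Ca q (m(G x k := v)) = execok Ca q m"
  unfolding execok_def by auto
lemma startok_upd_reg[simp]: "0 \<le> a \<Longrightarrow> startok Ca q (m(a := v)) = startok Ca q m"
  unfolding startok_def by (auto simp: G_ne_nonneg)
lemma startok_upd_G[simp]: "k < 8 \<Longrightarrow> k \<noteq> 4 \<Longrightarrow> startok Ca q (m(G x k := v)) = startok Ca q m"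
  unfolding startok_def by auto

lemma hasj_Suc: "hasj Ca (Suc q) j \<longleftrightarrow> hasj Ca q j \<or> Ca (setting.pth J Ca q) = int j + 1"
  unfolding hasj_def by (auto simp: less_Suc_eq)

lemma execok_idle: "Ca (setting.pth J Ca q) < 1 \<Longrightarrow> execok Ca (Suc q) m = execok Ca q m"
  unfolding execok_def hasj_Suc by auto
lemma startok_idle: "Ca (setting.pth J Ca q) < 1 \<Longrightarrow> startok Ca (Suc q) m = startok Ca q m"
  unfolding startok_def by (auto simp: less_Suc_eq)

lemma execok_job: "Ca (setting.pth J Ca q) = int j + 1 \<Longrightarrow> execok Ca q m \<Longrightarrow> execok Ca (Suc q) (m(G j 3 := 1))"
  unfolding execok_def hasj_Suc by auto

lemma startok_job:
  assumes S: "setting J mk Va Ca KK"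
  shows "Ca (setting.pth J Ca q) = int j + 1 \<Longrightarrow> startok Ca q m \<Longrightarrow>
         startok Ca (Suc q) (m(G j 4 := int (setting.pth J Ca q)))"
proof -
  interpret S: setting J mk Va Ca KK by (rule S)
  assume c: "Ca (S.pth q) = int j + 1" and s: "startok Ca q m"
  show "startok Ca (Suc q) (m(G j 4 := int (S.pth q)))"
    unfolding startok_def
  proof (intro allI impI)
    fix j' q' assume q': "q' < Suc q" "Ca (S.pth q') = int j' + 1"
    show "(m(G j 4 := int (S.pth q))) (G j' 4) = int (S.pth q')"
    proof (cases "j' = j")
      case True
      then have "S.pth q' = S.pth q" using S.pth_unique q'(2) c by blast
      then show ?thesis using True by simp
    next
      case False
      then have "q' \<noteq> q" using q'(2) c by auto
      then have "q' < q" using q'(1) by simp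
      then show ?thesis using s q'(2) False unfolding startok_def by simp
    qed
  qed
qed

definition RI :: "(nat \<Rightarrow> int) \<Rightarrow> (nat \<Rightarrow> int) \<Rightarrow> nat \<Rightarrow> nat \<Rightarrow> mem \<Rightarrow> nat \<Rightarrow> bool" where
  "RI Va Ca k0 q m k \<longleftrightarrow> regs m \<and> jobsto n m \<and> ar m 5 = Va \<and> ar m 6 = Ca \<and>
     m 10 = int (setting.pth J Ca q) \<and> m 15 = Ca (setting.pth J Ca q) \<and> q \<le> setting.pth J Ca q \<and>
     execok Ca q m \<and> startok Ca q m \<and> k \<le> k0 + 3 + 30 * q"

lemma r_body:
  assumes S: "setting J mk Va Ca KK"
  and ri: "RI Va Ca k0 q m k" and c: "m 0 \<le> m 15"
  shows "wp rbody (\<lambda>m' k'. RI Va Ca k0 (Suc q) m' (k' + 2)) m k"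
proof -
  interpret S: setting J mk Va Ca KK by (rule S)
  let ?p = "S.pth"
  have r: "m 0 = 0" "m 1 = 1" "m 2 = int n" "m 10 = int (?p q)" "m 15 = Ca (?p q)" "jobsto n m"
     "ar m 5 = Va" "ar m 6 = Ca" "q \<le> ?p q" "execok Ca q m" "startok Ca q m" "k \<le> k0 + 3 + 30 * q"
    using ri unfolding RI_def regs_def by auto
  have c0: "Ca (?p q) \<ge> 0" using c r by simp
  have nx: "?p (Suc q) = S.nxt (?p q)" using c0 by simp
  have lt: "?p q < S.nxt (?p q)" using S.nxt_props[OF S.pth_le_K c0] by simp
  have C15: "m (G x 6) = Ca x" for x using r(8) unfolding ar_def by (metis)
  show ?thesis
  proof (cases "Ca (?p q) \<ge> 1")
    case True
    define j where "j = nat (Ca (?p q)) - 1"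
    have cj: "Ca (?p q) = int j + 1" using True by (simp add: j_def)
    have ej: "exj J (?p q) j" using S.pth_job(1)[OF cj] .
    have jn: "j < n" using ej by (simp add: exj_def)
    have tj: "m (G j 0) = int (tt J j)" using r(6) jn unfolding jobsto_def by auto
    have ps: "S.nxt (?p q) = ?p q + tt J j" using S.pth_job(2)[OF cj] nx by simp
    have m15: "m 15 = int j + 1" using r(5) cj by simp
    have ex: "execok Ca (Suc q) (m(G j 3 := 1))" using execok_job[OF cj r(10)] .
    have st: "startok Ca (Suc q) (m(G j 3 := 1, G j 4 := int (?p q)))"
      using startok_job[OF S cj, of "m(G j 3 := 1)"] r(11) by simp
    show ?thesis
      unfolding rbody_def RI_def
      using r(1-4,6-12) tj C15 m15 lt ps jn cj
      by (simp add: regs_def execok_job startok_job[OF S])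
  next
    case False
    then have c00: "Ca (?p q) = 0" using c0 by simp
    have ps: "S.nxt (?p q) = ?p q + 1" using c00 by (simp add: S.nxt_def)
    show ?thesis
      unfolding rbody_def RI_def
      using r C15 lt ps c00 execok_idle[of Ca q] startok_idle[of Ca q]
      by (simp add: regs_def)
  qed
qed


definition Epost :: "(nat \<Rightarrow> int) \<Rightarrow> mem \<Rightarrow> bool" where
  "Epost Ca m \<longleftrightarrow> (\<forall>j. m (G j 3) = (if \<exists>q. Ca (setting.pth J Ca q) = int j + 1 then 1 else 0) \<and>
      (\<forall>q. Ca (setting.pth J Ca q) = int j + 1 \<longrightarrow> m (G j 4) = int (setting.pth J Ca q)))"

lemma recon_ok:
  assumes S: "setting J mk Va Ca KK"
  shows "hoare (\<lambda>m k. regs m \<and> jobsto n m \<and> zero3 m \<and> ar m 5 = Va \<and> ar m 6 = Ca \<and> k = c0) recon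
         (\<lambda>m k. regs m \<and> Epost Ca m \<and> k \<le> c0 + 5 + 30 * KK)"
proof -
  interpret S: setting J mk Va Ca KK by (rule S)
  have eq: "recon = seqs ([iC 10 0, iC 17 (G 0 6), iL 15 17] @ [WhileLe 0 15 rbody])" by (simp add: recon_def)
  have W: "hoare (\<lambda>m k. \<exists>q. RI Va Ca c0 q m k) (seqs [WhileLe 0 15 rbody])
         (\<lambda>m k. regs m \<and> Epost Ca m \<and> k \<le> c0 + 5 + 30 * KK)"
  proof (rule hoare_seqs_one, rule hoare_while[where f = "\<lambda>m. nat (int KK + 1 - m 10)"])
    fix v
    show "hoare (\<lambda>m k. (\<exists>q. RI Va Ca c0 q m k) \<and> m (int 0) \<le> m (int 15) \<and> nat (int KK + 1 - m 10) = v) rbody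
               (\<lambda>m k. (\<exists>q. RI Va Ca c0 q m (k + 2)) \<and> nat (int KK + 1 - m 10) < v)"
    proof (rule hoare_wpI)
      fix m k assume "(\<exists>q. RI Va Ca c0 q m k) \<and> m (int 0) \<le> m (int 15) \<and> nat (int KK + 1 - m 10) = v"
      then obtain q where h: "RI Va Ca c0 q m k" "m 0 \<le> m 15" "nat (int KK + 1 - m 10) = v" by auto
      have "wp rbody (\<lambda>m' k'. RI Va Ca c0 (Suc q) m' (k' + 2)) m k" using r_body[OF S h(1,2)] .
      then show "wp rbody (\<lambda>m k. (\<exists>q. RI Va Ca c0 q m (k + 2)) \<and> nat (int KK + 1 - m 10) < v) m k"
      proof (rule wp_mono)
        fix m' k' assume c: "RI Va Ca c0 (Suc q) m' (k' + 2)"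
        have "m 10 = int (S.pth q)" "m' 10 = int (S.pth (Suc q))" "m 0 = 0" "m 15 = Ca (S.pth q)"
          using h(1) c unfolding RI_def regs_def by auto
        moreover have "Ca (S.pth q) \<ge> 0" using h(2) calculation by simp
        moreover have "S.pth q < S.pth (Suc q)" "S.pth (Suc q) \<le> KK"
          using S.nxt_props[OF S.pth_le_K calculation(5)] calculation(5) S.pth_le_K by auto
        ultimately have "nat (int KK + 1 - m' 10) < nat (int KK + 1 - m 10)" by simp
        then show "(\<exists>q. RI Va Ca c0 q m' (k' + 2)) \<and> nat (int KK + 1 - m' 10) < v"
          using c h(3) by blast
      qed
    qed
  next
    fix m k assume "\<exists>q. RI Va Ca c0 q m k" "\<not> m (int 0) \<le> m (int 15)"
    then obtain q where c: "RI Va Ca c0 q m k" "\<not> m 0 \<le> m 15" by auto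
    have r: "regs m" "m 15 = Ca (S.pth q)" "q \<le> S.pth q" "execok Ca q m" "startok Ca q m" "k \<le> c0 + 3 + 30 * q"
      using c(1) unfolding RI_def by auto
    have neg: "Ca (S.pth q) < 0" using c(2) r(1,2) unfolding regs_def by simp
    have stuck: "S.pth q' = S.pth q" if "q \<le> q'" for q'
    proof -
      have "S.pth (q + (q' - q)) = S.pth q" by (rule S.pth_stuck[OF neg])
      then show ?thesis using that by simp
    qed
    have hq: "hasj Ca q j \<longleftrightarrow> (\<exists>q'. Ca (S.pth q') = int j + 1)" for j
    proof
      assume "\<exists>q'. Ca (S.pth q') = int j + 1"
      then obtain q' where q': "Ca (S.pth q') = int j + 1" by blast
      have "q' < q"
      proof (rule ccontr)
        assume "\<not> q' < q"
        then have "S.pth q' = S.pth q" by (intro stuck) simp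
        then show False using q' neg by simp
      qed
      then show "hasj Ca q j" using q' unfolding hasj_def by blast
    next
      assume "hasj Ca q j"
      then show "\<exists>q'. Ca (S.pth q') = int j + 1" unfolding hasj_def by blast
    qed
    have ep: "Epost Ca m"
      unfolding Epost_def
    proof (rule allI)
      fix j
      have A: "m (G j 3) = (if \<exists>q. Ca (S.pth q) = int j + 1 then 1 else 0)"
        using r(4) hq unfolding execok_def by simp
      have B: "\<forall>q'. Ca (S.pth q') = int j + 1 \<longrightarrow> m (G j 4) = int (S.pth q')"
      proof (intro allI impI)
        fix q' assume q': "Ca (S.pth q') = int j + 1"
        have "q' < q"
        proof (rule ccontr)
          assume "\<not> q' < q"
          then have "S.pth q' = S.pth q" by (intro stuck) simp
          then show False using q' neg by simp
        qed
        then show "m (G j 4) = int (S.pth q')" using r(5) q' unfolding startok_def by simp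
      qed
      show "m (G j 3) = (if \<exists>q. Ca (S.pth q) = int j + 1 then 1 else 0) \<and>
          (\<forall>q'. Ca (S.pth q') = int j + 1 \<longrightarrow> m (G j 4) = int (S.pth q'))" using A B by blast
    qed
    have "q \<le> KK" using r(3) S.pth_le_K[of q] by simp
    then show "regs m \<and> Epost Ca m \<and> k + 2 \<le> c0 + 5 + 30 * KK" using r(1,6) ep by simp
  qed
  show ?thesis unfolding eq
  proof (rule hoare_seqs_app[OF _ W])
    fix m k assume h: "regs m \<and> jobsto n m \<and> zero3 m \<and> ar m 5 = Va \<and> ar m 6 = Ca \<and> k = c0"
    have "m (G 0 6) = Ca 0" using h unfolding ar_def by auto
    moreover have "execok Ca 0 m" using h unfolding execok_def hasj_def zero3_def by simp
    moreover have "startok Ca 0 m" unfolding startok_def by simp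
    ultimately have "RI Va Ca c0 0 (m(10 := 0, 17 := G 0 6, 15 := m (G 0 6))) (k + 3)"
      using h unfolding RI_def regs_def by simp
    then show "wp (seqs [iC 10 0, iC 17 (G 0 6), iL 15 17]) (\<lambda>m k. \<exists>q. RI Va Ca c0 q m k) m k"
      by (simp add: eval_nat_numeral) blast
  qed
qed


lemma odd_even_ne[simp]: "1 + 2 * int a \<noteq> 2 + 2 * int b" "2 + 2 * int a \<noteq> 1 + 2 * int b"
  by presburger+
lemma G_ne_out[simp]: "G x k \<noteq> 1 + 2 * int a" "G x k \<noteq> 2 + 2 * int a"
  using G_neg[of x k] by auto
lemma odd_eq[simp]: "(1 + 2 * int a = 1 + 2 * int b) = (a = b)" "(2 + 2 * int a = 2 + 2 * int b) = (a = b)"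
  by auto

definition OI :: "mem \<Rightarrow> nat \<Rightarrow> nat \<Rightarrow> mem \<Rightarrow> nat \<Rightarrow> bool" where
  "OI M c0 i m k \<longleftrightarrow> 10 \<le> i \<and> (i \<le> n \<or> i = 10) \<and> regs m \<and> m 3 = int i + 1 \<and> m 4 = 1 + 2 * int i \<and> m 5 = G i 3 \<and>
     (\<forall>a<0. m a = M a) \<and>
     (\<forall>j. 10 \<le> j \<and> j < i \<longrightarrow> m (1 + 2 * int j) = M (G j 3) \<and> m (2 + 2 * int j) = M (G j 4)) \<and>
     k \<le> c0 + 3 + 12 * (i - 10)"

lemma o_body:
  assumes oi: "OI M c0 i m k" and c: "m 3 \<le> m 2"
  shows "wp obody (\<lambda>m' k'. OI M c0 (Suc i) m' (k' + 2)) m k"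
proof -
  have r: "10 \<le> i" "i < n" "m 0 = 0" "m 1 = 1" "m 2 = int n" "m 3 = int i + 1" "m 4 = 1 + 2 * int i" "m 5 = G i 3"
    "\<forall>a<0. m a = M a" "k \<le> c0 + 3 + 12 * (i - 10)"
    using oi c unfolding OI_def regs_def by auto
  have old: "\<forall>j. 10 \<le> j \<and> j < i \<longrightarrow> m (1 + 2 * int j) = M (G j 3) \<and> m (2 + 2 * int j) = M (G j 4)"
    using oi unfolding OI_def by (elim conjE) assumption
  have g: "m (G i 3) = M (G i 3)" "m (G i 4) = M (G i 4)" using r(9) G_neg by auto
  show ?thesis
    unfolding obody_def OI_def regs_def
    using r g old
    by simp
qed


definition OutPost :: "mem \<Rightarrow> nat \<Rightarrow> mem \<Rightarrow> nat \<Rightarrow> bool" where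
  "OutPost M c0 m k \<longleftrightarrow> (\<forall>j. 10 \<le> j \<and> j < n \<longrightarrow> m (1 + 2 * int j) = M (G j 3) \<and> m (2 + 2 * int j) = M (G j 4)) \<and>
     (\<forall>a<0. m a = M a) \<and> k \<le> c0 + 5 + 12 * n"

lemma outloop_ok:
  "hoare (\<lambda>m k. m = M \<and> k = c0 \<and> regs M) outloop (OutPost M c0)"
proof -
  have eq: "outloop = seqs ([iC 3 11, iC 4 21, iC 5 (G 10 3)] @ [WhileLe 3 2 obody])" by (simp add: outloop_def)
  have W: "hoare (\<lambda>m k. \<exists>i. OI M c0 i m k) (seqs [WhileLe 3 2 obody]) (OutPost M c0)"
  proof (rule hoare_seqs_one, rule hoare_while[where f = "\<lambda>m. nat (m 2 - m 3 + 1)"])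
    fix v
    show "hoare (\<lambda>m k. (\<exists>i. OI M c0 i m k) \<and> m (int 3) \<le> m (int 2) \<and> nat (m 2 - m 3 + 1) = v) obody
               (\<lambda>m k. (\<exists>i. OI M c0 i m (k + 2)) \<and> nat (m 2 - m 3 + 1) < v)"
    proof (rule hoare_wpI)
      fix m k assume "(\<exists>i. OI M c0 i m k) \<and> m (int 3) \<le> m (int 2) \<and> nat (m 2 - m 3 + 1) = v"
      then obtain i where h: "OI M c0 i m k" "m 3 \<le> m 2" "nat (m 2 - m 3 + 1) = v" by auto
      have "wp obody (\<lambda>m' k'. OI M c0 (Suc i) m' (k' + 2)) m k" using o_body[OF h(1,2)] .
      then show "wp obody (\<lambda>m k. (\<exists>i. OI M c0 i m (k + 2)) \<and> nat (m 2 - m 3 + 1) < v) m k"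
      proof (rule wp_mono)
        fix m' k' assume c: "OI M c0 (Suc i) m' (k' + 2)"
        have "m 2 = int n" "m 3 = int i + 1" "m' 2 = int n" "m' 3 = int i + 2" "i < n"
          using h(1,2) c unfolding OI_def regs_def by auto
        then show "(\<exists>i. OI M c0 i m' (k' + 2)) \<and> nat (m' 2 - m' 3 + 1) < v" using c h(3) by auto
      qed
    qed
  next
    fix m k assume "\<exists>i. OI M c0 i m k" "\<not> m (int 3) \<le> m (int 2)"
    then obtain i where c: "OI M c0 i m k" "\<not> m 3 \<le> m 2" by auto
    have r: "10 \<le> i" "i \<le> n \<or> i = 10" "m 2 = int n" "m 3 = int i + 1" "\<forall>a<0. m a = M a"
      "k \<le> c0 + 3 + 12 * (i - 10)"
      using c(1) unfolding OI_def regs_def by auto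
    have old: "\<forall>j. 10 \<le> j \<and> j < i \<longrightarrow> m (1 + 2 * int j) = M (G j 3) \<and> m (2 + 2 * int j) = M (G j 4)"
      using c(1) unfolding OI_def by (elim conjE) assumption
    have "n \<le> i" using c(2) r(3,4) by simp
    moreover have "i - 10 \<le> n" using r(1,2) by auto
    ultimately show "OutPost M c0 m (k + 2)" unfolding OutPost_def using old r(5,6) by auto
  qed
  show ?thesis unfolding eq
  proof (rule hoare_seqs_app[OF _ W])
    fix m k assume h: "m = M \<and> k = c0 \<and> regs M"
    then show "wp (seqs [iC 3 11, iC 4 21, iC 5 (G 10 3)]) (\<lambda>m k. \<exists>i. OI M c0 i m k) m k"
      unfolding OI_def regs_def by (auto intro!: exI[of _ 10])
  qed
qed

lemma less10: "(j::nat) < 10 \<longleftrightarrow> j = 0 \<or> j = 1 \<or> j = 2 \<or> j = 3 \<or> j = 4 \<or> j = 5 \<or> j = 6 \<or> j = 7 \<or> j = 8 \<or> j = 9"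
  by auto

lemma final_ok:
  assumes H: "\<And>m' k'. (\<forall>j<10. m' (1 + 2 * int j) = m (G j 3) \<and> m' (2 + 2 * int j) = m (G j 4)) \<Longrightarrow>
      (\<forall>a. 21 \<le> a \<longrightarrow> m' a = m a) \<Longrightarrow> k' = k + 40 \<Longrightarrow> Q m' k'"
  shows "wp final Q m k"
  unfolding final_def
  apply (simp add: upt_rec)
  apply (rule H)
    apply (simp add: less10)
    apply (simp_all add: eval_nat_numeral)
  done

end


lemma hoare_if:
  assumes "hoare (\<lambda>m k. P m k \<and> m (int i) \<le> m (int j)) a (\<lambda>m k. Q m (k + 1))"
    "hoare (\<lambda>m k. P m k \<and> \<not> m (int i) \<le> m (int j)) b (\<lambda>m k. Q m (k + 2))"
  shows "hoare P (IfLe i j a b) Q"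
  unfolding hoare_def
proof (intro allI impI)
  fix m k assume p: "P m k"
  show "\<exists>m' k'. bs (IfLe i j a b) m m' k' \<and> Q m' (k + k')"
  proof (cases "m (int i) \<le> m (int j)")
    case True
    then obtain m' k' where "bs a m m' k'" "Q m' (k + k' + 1)" using assms(1) p unfolding hoare_def by blast
    then show ?thesis using bs.bIfT[OF True] by (metis add.assoc)
  next
    case False
    then obtain m' k' where "bs b m m' k'" "Q m' (k + k' + 2)" using assms(2) p unfolding hoare_def by blast
    then show ?thesis using bs.bIfF[OF False] by (metis add.assoc)
  qed
qed

lemma hoare_le:
  assumes "\<And>k0. hoare (\<lambda>m k. P m \<and> k = k0) c (\<lambda>m k. Q m \<and> k \<le> k0 + d)"
  shows "hoare (\<lambda>m k. P m \<and> k \<le> B) c (\<lambda>m k. Q m \<and> k \<le> B + d)"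
  unfolding hoare_def
proof (intro allI impI)
  fix m k assume h: "P m \<and> k \<le> B"
  then obtain m' k' where "bs c m m' k'" "Q m' \<and> k + k' \<le> k + d"
    using assms[of k] unfolding hoare_def by blast
  moreover have "k + k' \<le> B + d" using h calculation(2) by linarith
  ultimately show "\<exists>m' k'. bs c m m' k' \<and> Q m' \<and> k + k' \<le> B + d" by blast
qed

context run
begin

lemma out_sch:
  assumes S: "setting J mk Va Ca KK" and E: "Epost Ca M"
    and O: "\<forall>i<n. m (1 + 2 * int i) = M (G i 3) \<and> m (2 + 2 * int i) = M (G i 4)"
    and i: "i < n"
  shows "output_schedule m i = setting.Sch J Ca i"
proof -
  interpret S: setting J mk Va Ca KK by (rule S)
  have o: "m (1 + 2 * int i) = M (G i 3)" "m (2 + 2 * int i) = M (G i 4)" using O i by auto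
  have e: "M (G i 3) = (if \<exists>q. Ca (S.pth q) = int i + 1 then 1 else 0)"
    "\<forall>q. Ca (S.pth q) = int i + 1 \<longrightarrow> M (G i 4) = int (S.pth q)"
    using E unfolding Epost_def by auto
  show ?thesis
  proof (cases "\<exists>q. Ca (S.pth q) = int i + 1")
    case True
    then obtain q where q: "Ca (S.pth q) = int i + 1" by blast
    then have "S.Sch i = Some (real (S.pth q))" using S.Sch_Some by blast
    moreover have "output_schedule m i = Some (real (S.pth q))"
      unfolding output_schedule_def using o e q True by simp
    ultimately show ?thesis by simp
  next
    case False
    then have "S.Sch i = None" using S.Sch_None by blast
    moreover have "output_schedule m i = None"
      unfolding output_schedule_def using o e False by simp
    ultimately show ?thesis by simp
  qed
qed


definition P5 :: "mem \<Rightarrow> bool" where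
  "P5 m \<longleftrightarrow> regs m \<and> jobsto n m \<and> zero3 m \<and> (\<forall>x\<le>KK. goodAt J mk (ar m 5) (ar m 6) x)"

definition P6 :: "mem \<Rightarrow> bool" where
  "P6 m \<longleftrightarrow> (\<exists>Va Ca. setting J mk Va Ca KK \<and> regs m \<and> Epost Ca m)"

definition P7 :: "mem \<Rightarrow> bool" where
  "P7 m \<longleftrightarrow> (\<exists>Va Ca M. setting J mk Va Ca KK \<and> Epost Ca M \<and>
      (\<forall>j. 10 \<le> j \<and> j < n \<longrightarrow> m (1 + 2 * int j) = M (G j 3) \<and> m (2 + 2 * int j) = M (G j 4)) \<and>
      (\<forall>a<0. m a = M a))"

definition P8 :: "mem \<Rightarrow> bool" where
  "P8 m \<longleftrightarrow> (\<exists>Va Ca. setting J mk Va Ca KK \<and> (\<forall>i<n. output_schedule m i = setting.Sch J Ca i))"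

lemma setting_of_P5: "P5 m \<Longrightarrow> setting J mk (ar m 5) (ar m 6) KK"
  unfolding P5_def by (unfold_locales) (auto simp: restr dd_le_KK)

definition Bmain :: nat where
  "Bmain = 72 + 4 + (5 + 26 * n) + (5 + 8 * n) + (3 + (KK + 1) * (32 * n + 40)) + (5 + 30 * KK) + (5 + 12 * n) + 40"

lemma main_ok:
  assumes n1: "1 \<le> n"
  shows "hoare (\<lambda>m k. m = m0(1 := - (m0 1 + 23 * int n)) \<and> k \<le> c) (main mk) (\<lambda>m k. P8 m \<and> k \<le> c + Bmain)"
proof -
  let ?B1 = "c + 72" and ?B2 = "c + 72 + 4"
  let ?B3 = "c + 72 + 4 + (5 + 26 * n)"
  let ?B4 = "?B3 + (5 + 8 * n)"
  let ?B5 = "?B4 + (3 + (KK + 1) * (32 * n + 40))"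
  let ?B6 = "?B5 + (5 + 30 * KK)"
  let ?B7 = "?B6 + (5 + 12 * n)"
  have h1: "hoare (\<lambda>m k. m = m0(1 := - (m0 1 + 23 * int n)) \<and> k \<le> c) boot2 (\<lambda>m k. postboot m \<and> k \<le> ?B1)"
  proof (rule hoare_wpI)
    fix m k assume h: "m = m0(1 := - (m0 1 + 23 * int n)) \<and> k \<le> c"
    have "wp boot2 (\<lambda>m k'. postboot m \<and> k' = k + 72) m k" using boot2_ok[of m k] h n1 by simp
    then show "wp boot2 (\<lambda>m k. postboot m \<and> k \<le> ?B1) m k" by (rule wp_mono) (use h in auto)
  qed
  have h2: "hoare (\<lambda>m k. postboot m \<and> k \<le> ?B1) initregs (\<lambda>m k. (regs m \<and> inpok m \<and> zero3 m) \<and> k \<le> ?B2)"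
  proof (rule hoare_wpI)
    fix m k assume h: "postboot m \<and> k \<le> ?B1"
    have a: "m (-1) = int n" using h init_0[of J] unfolding postboot_def by force
    have b: "inpok m" using h unfolding postboot_def inpok_def by auto
    have z: "zero3 m" using h G_le22 unfolding postboot_def zero3_def by auto
    show "wp initregs (\<lambda>m k. (regs m \<and> inpok m \<and> zero3 m) \<and> k \<le> ?B2) m k"
      unfolding initregs_def using a b z h by (simp add: regs_def)
  qed
  have c3: "\<And>k0. hoare (\<lambda>m k. (regs m \<and> inpok m \<and> zero3 m) \<and> k = k0) copy
        (\<lambda>m k. (regs m \<and> zero3 m \<and> jobsto n m) \<and> k \<le> k0 + (5 + 26 * n))"
    by (rule hoare_conseq[OF copy_ok]) auto
  have c4: "\<And>k0. hoare (\<lambda>m k. (regs m \<and> zero3 m \<and> jobsto n m) \<and> k = k0) kloop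
        (\<lambda>m k. (regs m \<and> jobsto n m \<and> zero3 m \<and> m 9 = int KK) \<and> k \<le> k0 + (5 + 8 * n))"
    by (rule hoare_conseq[OF kloop_ok]) auto
  have c5: "\<And>k0. hoare (\<lambda>m k. (regs m \<and> jobsto n m \<and> zero3 m \<and> m 9 = int KK) \<and> k = k0) (dp mk)
        (\<lambda>m k. P5 m \<and> k \<le> k0 + (3 + (KK + 1) * (32 * n + 40)))"
    by (rule hoare_conseq[OF dp_ok]) (auto simp: DPpost_def P5_def)
  have h6: "hoare (\<lambda>m k. P5 m \<and> k \<le> ?B5) recon (\<lambda>m k. P6 m \<and> k \<le> ?B6)"
  proof (rule hoare_pointwise)
    fix M K0 assume h: "P5 M \<and> K0 \<le> ?B5"
    have S: "setting J mk (ar M 5) (ar M 6) KK" using setting_of_P5 h by blast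
    show "hoare (\<lambda>m' k'. m' = M \<and> k' = K0) recon (\<lambda>m k. P6 m \<and> k \<le> ?B6)"
      by (rule hoare_conseq[OF recon_ok[OF S, of K0]]) (use h S in \<open>auto simp: P5_def P6_def\<close>)
  qed
  have h7: "hoare (\<lambda>m k. P6 m \<and> k \<le> ?B6) outloop (\<lambda>m k. P7 m \<and> k \<le> ?B7)"
  proof (rule hoare_pointwise)
    fix M K0 assume h: "P6 M \<and> K0 \<le> ?B6"
    then obtain Va Ca where S: "setting J mk Va Ca KK" "regs M" "Epost Ca M" unfolding P6_def by blast
    show "hoare (\<lambda>m' k'. m' = M \<and> k' = K0) outloop (\<lambda>m k. P7 m \<and> k \<le> ?B7)"
      by (rule hoare_conseq[OF outloop_ok[of M K0]]) (use h S in \<open>auto simp: OutPost_def P7_def\<close>)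
  qed
  have h8: "hoare (\<lambda>m k. P7 m \<and> k \<le> ?B7) (seqs [final]) (\<lambda>m k. P8 m \<and> k \<le> c + Bmain)"
  proof (rule hoare_wpI)
    fix m k assume h: "P7 m \<and> k \<le> ?B7"
    then obtain Va Ca M where S: "setting J mk Va Ca KK" "Epost Ca M"
      "\<forall>j. 10 \<le> j \<and> j < n \<longrightarrow> m (1 + 2 * int j) = M (G j 3) \<and> m (2 + 2 * int j) = M (G j 4)"
      "\<forall>a<0. m a = M a" unfolding P7_def by blast
    show "wp (seqs [final]) (\<lambda>m k. P8 m \<and> k \<le> c + Bmain) m k"
      unfolding wp_seqs_Cons wp_seqs_Nil
    proof (rule final_ok)
      fix m' k' assume f: "\<forall>j<10. m' (1 + 2 * int j) = m (G j 3) \<and> m' (2 + 2 * int j) = m (G j 4)"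
        "\<forall>a. 21 \<le> a \<longrightarrow> m' a = m a" "k' = k + 40"
      have O: "\<forall>i<n. m' (1 + 2 * int i) = M (G i 3) \<and> m' (2 + 2 * int i) = M (G i 4)"
      proof (intro allI impI)
        fix i assume i: "i < n"
        show "m' (1 + 2 * int i) = M (G i 3) \<and> m' (2 + 2 * int i) = M (G i 4)"
        proof (cases "i < 10")
          case True
          then show ?thesis using f(1) S(4) G_neg by auto
        next
          case False
          then show ?thesis using f(2) S(3) i by auto
        qed
      qed
      have "P8 m'" unfolding P8_def using out_sch[OF S(1,2) O] S(1) by blast
      moreover have "k' \<le> c + Bmain" using h f(3) unfolding Bmain_def by simp
      ultimately show "P8 m' \<and> k' \<le> c + Bmain" by simp
    qed
  qed
  show ?thesis
    unfolding main_def
    apply (rule hoare_seqs_cons[OF h1])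
    apply (rule hoare_seqs_cons[OF h2])
    apply (rule hoare_seqs_cons[OF hoare_le[OF c3]])
    apply (rule hoare_seqs_cons[OF hoare_le[OF c4]])
    apply (rule hoare_seqs_cons[OF hoare_le[OF c5]])
    apply (rule hoare_seqs_cons[OF h6])
    apply (rule hoare_seqs_cons[OF h7])
    apply (rule h8)
    done
qed


lemma boot1_wp: "wp boot1 (\<lambda>m k. m = m0(1 := - (m0 1 + 23 * int n)) \<and> k = 25) m0 0"
proof -
  have "m0 0 = int n" by (rule init_0)
  then show ?thesis unfolding boot1_def by (simp add: algebra_simps)
qed

lemma prog_ok: "hoare (\<lambda>m k. m = m0 \<and> k = 0) (prog mk) (\<lambda>m k. (n = 0 \<or> P8 m) \<and> k \<le> 27 + Bmain)"
  unfolding prog_def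
proof (rule hoare_seq)
  show "hoare (\<lambda>m k. m = m0 \<and> k = 0) boot1 (\<lambda>m k. m = m0(1 := - (m0 1 + 23 * int n)) \<and> k = 25)"
    by (rule hoare_wpI) (use boot1_wp in simp)
  show "hoare (\<lambda>m k. m = m0(1 := - (m0 1 + 23 * int n)) \<and> k = 25) (IfLe 0 1 Skip (main mk))
     (\<lambda>m k. (n = 0 \<or> P8 m) \<and> k \<le> 27 + Bmain)"
  proof (rule hoare_if)
    show "hoare (\<lambda>m k. (m = m0(1 := - (m0 1 + 23 * int n)) \<and> k = 25) \<and> m (int 0) \<le> m (int 1)) Skip
       (\<lambda>m k. (n = 0 \<or> P8 m) \<and> k + 1 \<le> 27 + Bmain)"
    proof (rule hoare_wpI)
      fix m and k :: nat assume h: "(m = m0(1 := - (m0 1 + 23 * int n)) \<and> k = 25) \<and> m (int 0) \<le> m (int 1)"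
      have "m0 1 \<ge> 0" by (rule init_nonneg)
      moreover have "m 0 = int n" "m 1 = - (m0 1 + 23 * int n)" using h init_0[of J] by auto
      moreover have "m 0 \<le> m 1" using h[THEN conjunct2] by simp
      ultimately have "int n \<le> 0" by linarith
      then have "n = 0" by simp
      then show "wp Skip (\<lambda>m k. (n = 0 \<or> P8 m) \<and> k + 1 \<le> 27 + Bmain) m k" using h by simp
    qed
    show "hoare (\<lambda>m k. (m = m0(1 := - (m0 1 + 23 * int n)) \<and> k = 25) \<and> \<not> m (int 0) \<le> m (int 1)) (main mk)
       (\<lambda>m k. (n = 0 \<or> P8 m) \<and> k + 2 \<le> 27 + Bmain)"
    proof (rule hoare_pointwise)
      fix M and K0 :: nat assume h: "(M = m0(1 := - (m0 1 + 23 * int n)) \<and> K0 = 25) \<and> \<not> M (int 0) \<le> M (int 1)"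
      have n1: "1 \<le> n"
      proof (rule ccontr)
        assume "\<not> 1 \<le> n"
        then have "n = 0" by linarith
        moreover then have "m0 1 = 0" by (simp add: initial_mem_def)
        moreover have "M 0 = m0 0" "M 1 = - (m0 1 + 23 * int n)" "\<not> M 0 \<le> M 1" using h by auto
        ultimately show False using init_0[of J] by simp
      qed
      show "hoare (\<lambda>m' k'. m' = M \<and> k' = K0) (main mk) (\<lambda>m k. (n = 0 \<or> P8 m) \<and> k + 2 \<le> 27 + Bmain)"
        by (rule hoare_conseq[OF main_ok[OF n1, of 25]]) (use h in auto)
    qed
  qed
qed

end

lemma cost_bound:
  fixes n KK :: nat
  shows "166 + 46 * n + 30 * KK + (KK + 1) * (32 * n + 40) \<le> 1000 * (n * max KK 1 * max n (max KK 1)) + 1000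
         \<or> n = 0"
proof (cases "n = 0")
  case True then show ?thesis by simp
next
  case False
  let ?K = "max KK 1"
  have n1: "1 \<le> n" using False by simp
  have K1: "1 \<le> ?K" "KK \<le> ?K" by auto
  have a: "(KK + 1) * (32 * n + 40) \<le> (2 * ?K) * (72 * n)"
    by (rule mult_mono) (use n1 K1 in auto)
  have b: "n * ?K \<le> n * ?K * max n ?K"
    using K1 by (metis max.cobounded2 mult.right_neutral mult_le_mono2 order.trans)
  have c: "n \<le> n * ?K" "KK \<le> n * ?K" using n1 K1
    by (metis mult.commute mult_le_mono2 nat_mult_1_right order.trans, metis mult_le_mono1 mult_1 order.trans)
  have "(2 * ?K) * (72 * n) = 144 * (n * ?K)" by simp
  then show ?thesis using a b c by linarith
qed


lemma empty_optimal: "lbp_optimal (lbp_objective obj) [] S"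
  unfolding lbp_optimal_def feasible_def valid_schedule_def processing_def lbp_objective_def
    total_work_def weighted_completed_def makespan_def executed_def
  by simp

theorem theorem4:
  shows "\<forall>obj\<in>{1, 2, 3::nat}. \<exists>(P::instr list) (C::nat). \<forall>J::job list.
     (\<forall>j\<in>set J. lbp_restricted j) \<longrightarrow>
     (let n = length J; K = max (lbp_K J) 1 in
        \<exists>k \<le> C * (n * K * max n K) + C.
          ram_halted P ((ram_step P ^^ k) (0, initial_mem J)) \<and>
          lbp_optimal (lbp_objective obj) J
            (output_schedule (snd ((ram_step P ^^ k) (0, initial_mem J)))))"
proof
  fix obj :: nat assume obj: "obj \<in> {1, 2, 3}"
  define mk where "mk = (obj = 3)"
  define P where "P = compc 0 (prog mk)"
  show "\<exists>(P::instr list) (C::nat). \<forall>J::job list.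
     (\<forall>j\<in>set J. lbp_restricted j) \<longrightarrow>
     (let n = length J; K = max (lbp_K J) 1 in
        \<exists>k \<le> C * (n * K * max n K) + C.
          ram_halted P ((ram_step P ^^ k) (0, initial_mem J)) \<and>
          lbp_optimal (lbp_objective obj) J
            (output_schedule (snd ((ram_step P ^^ k) (0, initial_mem J)))))"
  proof (intro exI allI impI)
    fix J :: "job list" assume R: "\<forall>j\<in>set J. lbp_restricted j"
    interpret run J mk using R by unfold_locales
    have "\<exists>k m'. (ram_step (compc 0 (prog mk)) ^^ k) (0, m0) = (clen (prog mk), m') \<and>
        ((n = 0 \<or> P8 m') \<and> k \<le> 27 + Bmain)"
      by (rule hoare_run[OF prog_ok]) simp
    then obtain k m' where run: "(ram_step P ^^ k) (0, m0) = (clen (prog mk), m')"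
      and q: "n = 0 \<or> P8 m'" "k \<le> 27 + Bmain" unfolding P_def by blast
    have Beq: "27 + Bmain = 166 + 46 * n + 30 * KK + (KK + 1) * (32 * n + 40)"
      unfolding Bmain_def by simp
    have kb: "k \<le> 1000 * (n * max (lbp_K J) 1 * max n (max (lbp_K J) 1)) + 1000"
    proof (cases "n = 0")
      case True
      then have "KK = 0" unfolding KK_def lbp_K_def by simp
      then show ?thesis using q(2) Beq True by simp
    next
      case False
      then show ?thesis using q(2) Beq cost_bound[of n KK] unfolding KK_def by linarith
    qed
    have halt: "ram_halted P ((ram_step P ^^ k) (0, m0))"
      using run unfolding ram_halted_def by (simp add: P_def)
    have opt: "lbp_optimal (lbp_objective obj) J (output_schedule m')"
    proof (cases "n = 0")
      case True
      then show ?thesis using empty_optimal by simp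
    next
      case False
      then obtain Va Ca where S: "setting J mk Va Ca KK" and o: "\<forall>i<n. output_schedule m' i = setting.Sch J Ca i"
        using q(1) unfolding P8_def by blast
      have "lbp_optimal (lbp_objective obj) J (setting.Sch J Ca)"
        using setting.optimal[OF S obj] mk_def by simp
      then show ?thesis using optimal_cong o by blast
    qed
    show "let n = length J; K = max (lbp_K J) 1 in
        \<exists>k \<le> 1000 * (n * K * max n K) + 1000.
          ram_halted P ((ram_step P ^^ k) (0, initial_mem J)) \<and>
          lbp_optimal (lbp_objective obj) J
            (output_schedule (snd ((ram_step P ^^ k) (0, initial_mem J))))"
      unfolding Let_def using kb halt opt run by auto
  qed
qed


end
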